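(* Let $m,k,n\ge 1$, let $A$ be a real $m\times m$ matrix and $B$ a real $m\times k$ matrix with $\operatorname{rank}[B, AB, \dots, A^{m-1}B]=m$. Let $g:\mathbb{R}^k\times\mathbb{R}^m\times\mathbb{R}^n\to\mathbb{R}^n$ be Borel measurable and bounded, $\sup_{(u,y,z)}\|g(u,y,z)\|<\infty$, and Lipschitz continuous in $(y,z)$ uniformly with respect to $u\in\mathbb{R}^k$. Fix $y_0\in\mathbb{R}^m$, $z_0\in\mathbb{R}^n$, $T>0$, and a continuous function $G:\mathbb{R}^n\to\mathbb{R}$. For $\varepsilon>0$ let $$G^*_\varepsilon:=\inf_{u(\cdot)} G(z_\varepsilon(T)),$$ where the infimum is over measurable controls $u:[0,T]\to\mathbb{R}^k$ and the corresponding solutions $(y_\varepsilon(\cdot),z_\varepsilon(\cdot))$ of $$\varepsilon\,\frac{dy(t)}{dt}=Ay(t)+Bu(t),\quad y(0)=y_0,\qquad \frac{dz(t)}{dt}=g(u(t),y(t),z(t)),\quad z(0)=z_0.$$ Let $$G^*:=\inf_{u(\cdot),y(\cdot)} G(z(T)),$$ where the infimum is over measurable functions $u:[0,T]\to\mathbb{R}^k$, $y:[0,T]\to\mathbb{R}^m$ and the corresponding solutions $z(\cdot)$ of $\frac{dz(t)}{dt}=g(u(t),y(t),z(t))$, $z(0)=z_0$ (both $u$ and $y$ play the role of controls). Then $G^*_\varepsilon=G^*$ for every $\varepsilon>0$.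
   Context: Solutions of the differential equations are understood in the Carathéodory (absolutely continuous) sense; in the definition of $G^*_\varepsilon$ the controls range over those measurable $u$ for which the system has a solution on $[0,T]$. *)

theory Defs
  imports "HOL-Analysis.Analysis"
begin

primrec mat_pow :: "real^'m^'m \<Rightarrow> nat \<Rightarrow> real^'m^'m" where
  "mat_pow A 0 = mat 1"
| "mat_pow A (Suc i) = A ** mat_pow A i"

text \<open>Rank of the Kalman block matrix [B, AB, ..., A^(m-1) B], i.e. the dimension
  of the space spanned by its columns (the columns of the blocks A^i B, i < m).\<close>
definition kalman_rank :: "real^'m^'m \<Rightarrow> real^'k^'m \<Rightarrow> nat" where
  "kalman_rank A B = dim (\<Union>i<CARD('m). columns (mat_pow A i ** B))"

text \<open>Caratheodory solution on [0,T] of x' = f(t,x), x(0) = x0: the right-hand side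
  along x is Lebesgue integrable on [0,T] and x is its indefinite integral
  (equivalently: x absolutely continuous, x(0)=x0, x' = f(t,x) a.e.).\<close>
definition cara_solution ::
  "(real \<Rightarrow> 'a::euclidean_space \<Rightarrow> 'a) \<Rightarrow> 'a \<Rightarrow> real \<Rightarrow> (real \<Rightarrow> 'a) \<Rightarrow> bool" where
  "cara_solution f x0 T x \<longleftrightarrow>
     (\<lambda>s. f s (x s)) absolutely_integrable_on {0..T} \<and>
     (\<forall>t\<in>{0..T}. x t = x0 + integral {0..t} (\<lambda>s. f s (x s)))"

definition meas_on :: "real \<Rightarrow> (real \<Rightarrow> 'a::euclidean_space) \<Rightarrow> bool" where
  "meas_on T u \<longleftrightarrow> u \<in> borel_measurable (lebesgue_on {0..T})"

definition G_eps ::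
  "real^'m^'m \<Rightarrow> real^'k^'m \<Rightarrow> (real^'k \<Rightarrow> real^'m \<Rightarrow> real^'n \<Rightarrow> real^'n) \<Rightarrow>
   real^'m \<Rightarrow> real^'n \<Rightarrow> real \<Rightarrow> (real^'n \<Rightarrow> real) \<Rightarrow> real \<Rightarrow> real" where
  "G_eps A B g y0 z0 T G \<epsilon> = Inf {G (z T) | u y z.
      meas_on T u \<and>
      cara_solution (\<lambda>t y. (1 / \<epsilon>) *\<^sub>R (A *v y + B *v u t)) y0 T y \<and>
      cara_solution (\<lambda>t z. g (u t) (y t) z) z0 T z}"

definition G_relaxed ::
  "(real^'k \<Rightarrow> real^'m \<Rightarrow> real^'n \<Rightarrow> real^'n) \<Rightarrow>
   real^'n \<Rightarrow> real \<Rightarrow> (real^'n \<Rightarrow> real) \<Rightarrow> real" where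
  "G_relaxed g z0 T G = Inf {G (z T) | u (y :: real \<Rightarrow> real^'m) z.
      meas_on T u \<and> meas_on T y \<and>
      cara_solution (\<lambda>t z. g (u t) (y t) z) z0 T z}"

end

theory Submission
  imports Defs
begin


lemma gronwall:
  fixes e :: "real \<Rightarrow> real"
  assumes ab: "a \<le> b" and econt: "continuous_on {a..b} e" and C: "0 \<le> C" and K: "0 < K"
    and hyp: "\<And>t. t \<in> {a..b} \<Longrightarrow> e t \<le> C + K * integral {a..t} e"
    and t: "t \<in> {a..b}"
  shows "e t \<le> C * exp (K * (t - a))"
proof -
  define I where "I = (\<lambda>s. integral {a..s} e)"
  define w where "w = (\<lambda>s. exp (- K * (s - a)) * (C + K * I s))"
  have Icont: "continuous_on {a..b} I"
    unfolding I_def by (rule indefinite_integral_continuous_1) (rule integrable_continuous_interval[OF econt])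
  have "w t \<le> w a"
  proof (rule DERIV_nonpos_imp_decreasing_open[of a t w])
    show "a \<le> t" using t by auto
    show "continuous_on {a..t} w"
      unfolding w_def using t
      by (intro continuous_intros continuous_on_subset[OF Icont]) auto
  next
    fix x assume x: "a < x" "x < t"
    then have xi: "x \<in> interior {a..b}" using t by auto
    have "(I has_vector_derivative e x) (at x within {a..b})"
      unfolding I_def using x t by (intro integral_has_vector_derivative econt) auto
    then have "(I has_vector_derivative e x) (at x)"
      using at_within_interior[OF xi] by simp
    then have dI: "(I has_real_derivative e x) (at x)"
      unfolding has_real_derivative_iff_has_vector_derivative .
    have "(w has_real_derivative
       (exp (- K * (x - a)) * (- K * 1)) * (C + K * I x) + exp (- K * (x - a)) * (K * e x)) (at x)"
      unfolding w_def using dI by (auto intro!: derivative_eq_intros)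
    moreover have "(exp (- K * (x - a)) * (- K * 1)) * (C + K * I x) + exp (- K * (x - a)) * (K * e x) \<le> 0"
    proof -
      have "e x \<le> C + K * I x" using hyp[of x] x t unfolding I_def by auto
      then have "K * e x \<le> K * (C + K * I x)" using K by auto
      then have "exp (- K * (x - a)) * (K * e x) \<le> exp (- K * (x - a)) * (K * (C + K * I x))"
        by (rule mult_left_mono) auto
      then show ?thesis by (simp add: algebra_simps)
    qed
    ultimately show "\<exists>y. (w has_real_derivative y) (at x) \<and> y \<le> 0" by blast
  qed
  moreover have "w a = C" unfolding w_def I_def by simp
  ultimately have "exp (- K * (t - a)) * (C + K * I t) \<le> C" unfolding w_def by (simp add: I_def)
  then have "(exp (- K * (t - a)) * (C + K * I t)) * exp (K * (t - a)) \<le> C * exp (K * (t - a))"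
    by (rule mult_right_mono) auto
  moreover have "exp (- K * (t - a)) * exp (K * (t - a)) = 1"
    using exp_minus_inverse[of "K * (t - a)"] by (simp add: mult.commute)
  ultimately have "C + K * I t \<le> C * exp (K * (t - a))"
    by (metis (no_types, lifting) mult.assoc mult.commute mult_1)
  then show ?thesis using hyp[OF t] unfolding I_def by simp
qed



lemma bdd_meas_abs_int:
  fixes h :: "real \<Rightarrow> 'a::euclidean_space"
  assumes "h \<in> borel_measurable (lebesgue_on {a..b})" "\<And>s. s \<in> {a..b} \<Longrightarrow> norm (h s) \<le> B"
  shows "h absolutely_integrable_on {a..b}"
  by (rule measurable_bounded_by_integrable_imp_absolutely_integrable[where g="\<lambda>_. B"])
     (use assms in auto)

lemma integral_exp_lin:
  fixes L t :: real
  assumes "0 < L" "0 \<le> t"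
  shows "integral {0..t} (\<lambda>s. exp (2 * L * s)) = (exp (2 * L * t) - 1) / (2 * L)"
proof -
  have "((\<lambda>s. exp (2 * L * s)) has_integral (exp (2 * L * t) / (2 * L) - exp (2 * L * 0) / (2 * L))) {0..t}"
  proof (rule fundamental_theorem_of_calculus[where f="\<lambda>s. exp (2 * L * s) / (2 * L)"])
    fix x :: real
    have "((\<lambda>s. exp (2 * L * s) / (2 * L)) has_real_derivative exp (2 * L * x) * (2 * L * 1) / (2 * L)) (at x within {0..t})"
      using assms by (intro derivative_eq_intros) auto
    then show "((\<lambda>s. exp (2 * L * s) / (2 * L)) has_vector_derivative exp (2 * L * x)) (at x within {0..t})"
      using assms unfolding has_real_derivative_iff_has_vector_derivative by simp
  qed (use assms in auto)
  then show ?thesis using assms by (simp add: integral_unique diff_divide_distrib)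
qed

lemma picard_solution_exists:
  fixes f :: "real \<Rightarrow> 'a::euclidean_space \<Rightarrow> 'a"
  assumes T: "0 \<le> T" and L: "0 < L"
    and meas: "\<And>x. continuous_on {0..T} x \<Longrightarrow> (\<lambda>s. f s (x s)) \<in> borel_measurable (lebesgue_on {0..T})"
    and lip: "\<And>s x x'. s \<in> {0..T} \<Longrightarrow> norm (f s x - f s x') \<le> L * norm (x - x')"
    and bd: "\<And>s. s \<in> {0..T} \<Longrightarrow> norm (f s x0) \<le> M"
  shows "\<exists>x. cara_solution f x0 T x \<and> continuous_on {0..T} x"
proof -
  have M: "0 \<le> M" using bd[of 0] T by (auto intro: order_trans[OF norm_ge_zero])
  have ai: "(\<lambda>s. f s (x s)) absolutely_integrable_on {0..T}" if xc: "continuous_on {0..T} x" for x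
  proof -
    have "compact (x ` {0..T})" by (rule compact_continuous_image[OF xc]) auto
    then obtain B where B: "\<And>s. s \<in> {0..T} \<Longrightarrow> norm (x s) \<le> B"
      by (meson compact_imp_bounded bounded_iff imageI)
    show ?thesis
    proof (rule bdd_meas_abs_int[OF meas[OF xc]])
      fix s assume s: "s \<in> {0..T}"
      have "norm (f s (x s)) \<le> norm (f s (x s) - f s x0) + norm (f s x0)"
        using norm_triangle_ineq[of "f s (x s) - f s x0" "f s x0"] by simp
      also have "\<dots> \<le> L * norm (x s - x0) + M" using lip[OF s] bd[OF s] by (intro add_mono) auto
      also have "\<dots> \<le> L * (B + norm x0) + M"
        using L B[OF s] by (intro add_mono mult_left_mono order_trans[OF norm_triangle_ineq4]) auto
      finally show "norm (f s (x s)) \<le> L * (B + norm x0) + M" .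
    qed
  qed
  define p where "p = rec_nat (\<lambda>t. x0) (\<lambda>n q t. x0 + integral {0..t} (\<lambda>s. f s (q s)))"
  have p0: "p 0 = (\<lambda>t. x0)" and pS: "\<And>n. p (Suc n) = (\<lambda>t. x0 + integral {0..t} (\<lambda>s. f s (p n s)))"
    unfolding p_def by simp_all
  have pSt: "p (Suc n) t = x0 + integral {0..t} (\<lambda>s. f s (p n s))" for n t by (simp add: pS)
  have pc: "continuous_on {0..T} (p n)" for n
  proof (induction n)
    case 0 then show ?case by (simp add: p0)
  next
    case (Suc n)
    show ?case unfolding pS
      by (intro continuous_intros indefinite_integral_continuous_1
          set_lebesgue_integral_eq_integral(1) ai Suc absolutely_integrable_on_def[THEN iffD1, THEN conjunct1])
  qed
  have pint: "(\<lambda>s. f s (p n s)) integrable_on {0..t}" if "t \<in> {0..T}" for n t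
    using integrable_on_subinterval[OF absolutely_integrable_on_def[THEN iffD1, OF ai[OF pc], THEN conjunct1]] that
    by auto
  define C where "C = M * T"
  have C: "0 \<le> C" using M T by (simp add: C_def)
  have dbd: "norm (p (Suc n) t - p n t) \<le> C * (1/2)^n * exp (2 * L * t)" if "t \<in> {0..T}" for n t
    using that
  proof (induction n arbitrary: t)
    case 0
    have "norm (p (Suc 0) t - p 0 t) = norm (integral {0..t} (\<lambda>s. f s x0))" by (simp add: pS p0)
    also have "\<dots> \<le> integral {0..t} (\<lambda>s. M)"
      using pint[OF 0, of 0] 0 bd by (intro integral_norm_bound_integral) (auto simp: p0)
    also have "\<dots> = M * t" using 0 by simp
    also have "\<dots> \<le> C * (1/2)^0 * exp (2 * L * t)"
    proof -
      have "M * t \<le> M * T" using 0 M by (intro mult_left_mono) auto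
      also have "\<dots> \<le> M * T * exp (2 * L * t)"
      proof -
        have "1 \<le> exp (2 * L * t)" using L 0 by simp
        then show ?thesis using mult_left_mono[of 1 "exp (2 * L * t)" "M * T"] M T by simp
      qed
      finally show ?thesis by (simp add: C_def)
    qed
    finally show ?case .
  next
    case (Suc n)
    have "norm (p (Suc (Suc n)) t - p (Suc n) t)
        = norm (integral {0..t} (\<lambda>s. f s (p (Suc n) s) - f s (p n s)))"
      using pint[OF Suc.prems] unfolding pSt[of "Suc n" t] pSt[of n t] by (simp add: integral_diff)
    also have "\<dots> \<le> integral {0..t} (\<lambda>s. (L * C * (1/2)^n) * exp (2 * L * s))"
    proof (intro integral_norm_bound_integral integrable_diff pint Suc.prems)
      show "(\<lambda>s. (L * C * (1/2)^n) * exp (2 * L * s)) integrable_on {0..t}"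
        by (intro integrable_continuous_interval continuous_intros)
      fix s assume s: "s \<in> {0..t}"
      then have s': "s \<in> {0..T}" using Suc.prems by auto
      have "norm (f s (p (Suc n) s) - f s (p n s)) \<le> L * norm (p (Suc n) s - p n s)" using lip[OF s'] by blast
      also have "\<dots> \<le> L * (C * (1/2)^n * exp (2 * L * s))"
        using Suc.IH[OF s'] L by (intro mult_left_mono) auto
      finally show "norm (f s (p (Suc n) s) - f s (p n s)) \<le> (L * C * (1/2)^n) * exp (2 * L * s)"
        by (simp add: algebra_simps)
    qed
    also have "\<dots> = (L * C * (1/2)^n) * ((exp (2 * L * t) - 1) / (2 * L))"
      using integral_exp_lin[OF L, of t] Suc.prems by simp
    also have "\<dots> \<le> C * (1/2)^(Suc n) * exp (2 * L * t)"
    proof -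
      have "(L * C * (1/2)^n) * ((exp (2 * L * t) - 1) / (2 * L)) = C * (1/2)^(Suc n) * (exp (2 * L * t) - 1)"
        using L by (simp add: field_simps)
      also have "\<dots> \<le> C * (1/2)^(Suc n) * exp (2 * L * t)"
        using C by (intro mult_left_mono) auto
      finally show ?thesis .
    qed
    finally show ?case .
  qed
  define K where "K = C * exp (2 * L * T)"
  have dbd': "norm (p (Suc n) t - p n t) \<le> K * (1/2)^n" if "t \<in> {0..T}" for n t
  proof -
    have "C * (1/2)^n * exp (2 * L * t) \<le> C * (1/2)^n * exp (2 * L * T)"
      using that L C by (intro mult_left_mono) auto
    then show ?thesis using dbd[OF that, of n] by (simp add: K_def algebra_simps)
  qed
  have summ: "summable (\<lambda>n. K * (1/2::real)^n)" by (intro summable_mult summable_geometric) auto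
  have ul: "uniform_limit {0..T} (\<lambda>n t. \<Sum>i<n. p (Suc i) t - p i t) (\<lambda>t. \<Sum>i. p (Suc i) t - p i t) sequentially"
    by (rule Weierstrass_m_test[OF _ summ]) (rule dbd')
  define x where "x = (\<lambda>t. x0 + (\<Sum>i. p (Suc i) t - p i t))"
  have psum: "p n t = x0 + (\<Sum>i<n. p (Suc i) t - p i t)" for n t
    using sum_lessThan_telescope[of "\<lambda>i. p i t" n] by (simp add: p0)
  have ul2: "uniform_limit {0..T} p x sequentially"
  proof -
    have "uniform_limit {0..T} (\<lambda>n t. x0 + (\<Sum>i<n. p (Suc i) t - p i t)) x sequentially"
      unfolding x_def by (intro uniform_limit_add uniform_limit_const ul)
    then show ?thesis by (simp add: psum[symmetric])
  qed
  have xc: "continuous_on {0..T} x"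
    by (rule uniform_limit_theorem[OF _ ul2]) (auto intro: pc always_eventually)
  have "x t = x0 + integral {0..t} (\<lambda>s. f s (x s))" if t: "t \<in> {0..T}" for t
  proof -
    have lim1: "(\<lambda>n. p (Suc n) t) \<longlonglongrightarrow> x t"
      using tendsto_uniform_limitI[OF ul2 t] by (rule LIMSEQ_Suc)
    have xint: "(\<lambda>s. f s (x s)) integrable_on {0..t}"
      using integrable_on_subinterval[OF absolutely_integrable_on_def[THEN iffD1, OF ai[OF xc], THEN conjunct1]] t
      by auto
    have "(\<lambda>n. integral {0..t} (\<lambda>s. f s (p n s))) \<longlonglongrightarrow> integral {0..t} (\<lambda>s. f s (x s))"
    proof (rule LIMSEQ_I)
      fix r :: real assume r: "0 < r"
      define e where "e = r / (2 * L * (T + 1))"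
      have e: "0 < e" using r L T by (simp add: e_def)
      from ul2[unfolded uniform_limit_iff, rule_format, OF e]
      obtain N where N: "\<And>n. n \<ge> N \<Longrightarrow> \<forall>s\<in>{0..T}. dist (p n s) (x s) < e"
        by (auto simp: eventually_sequentially)
      show "\<exists>N. \<forall>n\<ge>N. norm (integral {0..t} (\<lambda>s. f s (p n s)) - integral {0..t} (\<lambda>s. f s (x s))) < r"
      proof (intro exI allI impI)
        fix n assume n: "N \<le> n"
        have "norm (integral {0..t} (\<lambda>s. f s (p n s)) - integral {0..t} (\<lambda>s. f s (x s)))
            = norm (integral {0..t} (\<lambda>s. f s (p n s) - f s (x s)))"
          using pint[OF t] xint by (simp add: integral_diff)
        also have "\<dots> \<le> integral {0..t} (\<lambda>s. L * e)"
        proof (intro integral_norm_bound_integral integrable_diff pint t xint)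
          show "(\<lambda>s. L * e) integrable_on {0..t}" by (rule integrable_const_ivl)
          fix s assume s: "s \<in> {0..t}"
          then have s': "s \<in> {0..T}" using t by auto
          have "norm (f s (p n s) - f s (x s)) \<le> L * norm (p n s - x s)" using lip[OF s'] by blast
          also have "\<dots> \<le> L * e" using N[OF n] s' L by (intro mult_left_mono) (auto simp: dist_norm less_imp_le)
          finally show "norm (f s (p n s) - f s (x s)) \<le> L * e" .
        qed
        also have "\<dots> = t * (L * e)" using t by simp
        also have "\<dots> \<le> (T + 1) * (L * e)" using t L e by (intro mult_right_mono) auto
        also have "\<dots> = r / 2"
        proof -
          show ?thesis using L T by (simp add: e_def field_simps add_nonneg_eq_0_iff)
        qed
        also have "\<dots> < r" using r by simp
        finally show "norm (integral {0..t} (\<lambda>s. f s (p n s)) - integral {0..t} (\<lambda>s. f s (x s))) < r" .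
      qed
    qed
    then have "(\<lambda>n. p (Suc n) t) \<longlonglongrightarrow> x0 + integral {0..t} (\<lambda>s. f s (x s))"
      unfolding pS by (intro tendsto_add tendsto_const)
    with lim1 show ?thesis by (rule LIMSEQ_unique)
  qed
  then show ?thesis using ai[OF xc] xc unfolding cara_solution_def by blast
qed



lemma borel_to_lebon:
  "f \<in> borel_measurable borel \<Longrightarrow> f \<in> borel_measurable (lebesgue_on S)"
  by (simp add: measurable_completion measurable_restrict_space1)

lemma matvec_bound:
  fixes A :: "real^'n^'m"
  obtains K where "0 < K" "\<And>x. norm (A *v x) \<le> K * norm x"
proof -
  from bounded_linear.pos_bounded[OF matrix_vector_mul_bounded_linear[of A]]
  obtain K where "0 < K" "\<And>x. norm (A *v x) \<le> norm x * K" by blast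
  then show ?thesis using that by (auto simp: mult.commute)
qed

lemma cara_cont:
  assumes "cara_solution f a T y"
  shows "continuous_on {0..T} y"
proof -
  have i: "(\<lambda>s. f s (y s)) integrable_on {0..T}"
    using assms unfolding cara_solution_def by (simp add: absolutely_integrable_on_def)
  have "continuous_on {0..T} (\<lambda>t. a + integral {0..t} (\<lambda>s. f s (y s)))"
    by (intro continuous_intros indefinite_integral_continuous_1 i)
  then show ?thesis
    by (rule continuous_on_eq) (use assms in \<open>auto simp: cara_solution_def\<close>)
qed

lemma cara_restrict:
  assumes "cara_solution f a T y" "T' \<le> T"
  shows "cara_solution f a T' y"
  using assms unfolding cara_solution_def
  by (auto intro: absolutely_integrable_on_subinterval)

lemma cara_int:
  assumes "cara_solution f a T y" "t \<in> {0..T}"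
  shows "(\<lambda>s. f s (y s)) integrable_on {0..t}"
  using assms unfolding cara_solution_def
  by (auto intro: integrable_on_subinterval simp: absolutely_integrable_on_def)

definition lf :: "real^'m^'m \<Rightarrow> real^'k^'m \<Rightarrow> real \<Rightarrow> (real \<Rightarrow> real^'k) \<Rightarrow> real \<Rightarrow> real^'m \<Rightarrow> real^'m"
  where "lf A B e u = (\<lambda>t y. (1 / e) *\<^sub>R (A *v y + B *v u t))"

lemma lin_exists:
  fixes A :: "real^'m^'m" and B :: "real^'k^'m"
  assumes e: "0 < e" and T: "0 \<le> T" and um: "meas_on T u" and R: "\<And>t. norm (u t) \<le> R"
  shows "\<exists>y. cara_solution (lf A B e u) a T y"
proof -
  obtain KA where KA: "0 < KA" "\<And>x. norm (A *v x) \<le> KA * norm x" by (rule matvec_bound[of A]) blast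
  obtain KB where KB: "0 < KB" "\<And>x. norm (B *v x) \<le> KB * norm x" by (rule matvec_bound[of B]) blast
  have "\<exists>y. cara_solution (lf A B e u) a T y \<and> continuous_on {0..T} y"
  proof (rule picard_solution_exists[where L="KA / e" and M="(KA * norm a + KB * R) / e"])
    show "0 \<le> T" "0 < KA / e" using T KA e by auto
  next
    fix x :: "real \<Rightarrow> real^'m" assume xc: "continuous_on {0..T} x"
    have "x \<in> borel_measurable (lebesgue_on {0..T})"
      by (rule continuous_imp_measurable_on_sets_lebesgue[OF xc]) auto
    moreover have "u \<in> borel_measurable (lebesgue_on {0..T})" using um by (simp add: meas_on_def)
    ultimately have "(\<lambda>s. (1 / e) *\<^sub>R (A *v x s + B *v u s)) \<in> borel_measurable (lebesgue_on {0..T})"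
      by (intro borel_measurable_scaleR borel_measurable_const borel_measurable_add
          measurable_compose[OF _ borel_measurable_continuous_onI[OF linear_continuous_on[OF matrix_vector_mul_bounded_linear]]])
    then show "(\<lambda>s. lf A B e u s (x s)) \<in> borel_measurable (lebesgue_on {0..T})"
      by (simp add: lf_def)
  next
    fix s x x'
    have "norm (lf A B e u s x - lf A B e u s x') = norm ((1 / e) *\<^sub>R (A *v (x - x')))"
      by (simp add: lf_def matrix_vector_mult_diff_distrib scaleR_diff_right[symmetric])
    also have "\<dots> = (1 / e) * norm (A *v (x - x'))" using e by simp
    also have "\<dots> \<le> (1 / e) * (KA * norm (x - x'))" using KA(2) e by (intro mult_left_mono) auto
    finally show "norm (lf A B e u s x - lf A B e u s x') \<le> KA / e * norm (x - x')" by simp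
  next
    fix s
    have "norm (lf A B e u s a) = (1 / e) * norm (A *v a + B *v u s)" using e by (simp add: lf_def)
    also have "\<dots> \<le> (1 / e) * (KA * norm a + KB * R)"
    proof (intro mult_left_mono)
      have "norm (A *v a + B *v u s) \<le> norm (A *v a) + norm (B *v u s)" by (rule norm_triangle_ineq)
      also have "\<dots> \<le> KA * norm a + KB * norm (u s)" using KA KB by (intro add_mono) auto
      also have "\<dots> \<le> KA * norm a + KB * R" using KA KB R[of s] by (intro add_mono mult_left_mono) (auto simp: less_imp_le)
      finally show "norm (A *v a + B *v u s) \<le> KA * norm a + KB * R" .
    qed (use e in auto)
    finally show "norm (lf A B e u s a) \<le> (KA * norm a + KB * R) / e" by simp
  qed
  then show ?thesis by blast
qed



lemma lin_add:
  assumes "cara_solution (lf A B e u1) a T y1" "cara_solution (lf A B e u2) b T y2"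
  shows "cara_solution (lf A B e (\<lambda>t. u1 t + u2 t)) (a + b) T (\<lambda>t. y1 t + y2 t)"
proof -
  have eq: "lf A B e (\<lambda>t. u1 t + u2 t) s (y1 s + y2 s) = lf A B e u1 s (y1 s) + lf A B e u2 s (y2 s)" for s
    by (simp add: lf_def matrix_vector_right_distrib scaleR_add_right add_ac)
  show ?thesis
    unfolding cara_solution_def eq
  proof (intro conjI ballI)
    show "(\<lambda>s. lf A B e u1 s (y1 s) + lf A B e u2 s (y2 s)) absolutely_integrable_on {0..T}"
      using assms unfolding cara_solution_def by (intro set_integral_add) auto
    fix t assume t: "t \<in> {0..T}"
    have "integral {0..t} (\<lambda>s. lf A B e u1 s (y1 s) + lf A B e u2 s (y2 s))
        = integral {0..t} (\<lambda>s. lf A B e u1 s (y1 s)) + integral {0..t} (\<lambda>s. lf A B e u2 s (y2 s))"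
      by (intro integral_add cara_int[OF assms(1) t] cara_int[OF assms(2) t])
    then show "y1 t + y2 t = a + b + integral {0..t} (\<lambda>s. lf A B e u1 s (y1 s) + lf A B e u2 s (y2 s))"
      using assms t unfolding cara_solution_def by (simp add: algebra_simps)
  qed
qed

lemma lin_scale:
  assumes "cara_solution (lf A B e u) a T y"
  shows "cara_solution (lf A B e (\<lambda>t. c *\<^sub>R u t)) (c *\<^sub>R a) T (\<lambda>t. c *\<^sub>R y t)"
proof -
  have eq: "lf A B e (\<lambda>t. c *\<^sub>R u t) s (c *\<^sub>R y s) = c *\<^sub>R lf A B e u s (y s)" for s
    by (simp add: lf_def matrix_vector_mult_scaleR scaleR_add_right)
  show ?thesis
    unfolding cara_solution_def eq
  proof (intro conjI ballI)
    show "(\<lambda>s. c *\<^sub>R lf A B e u s (y s)) absolutely_integrable_on {0..T}"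
      using assms unfolding cara_solution_def by (intro absolutely_integrable_scaleR_left) auto
    fix t assume t: "t \<in> {0..T}"
    show "c *\<^sub>R y t = c *\<^sub>R a + integral {0..t} (\<lambda>s. c *\<^sub>R lf A B e u s (y s))"
      using assms t unfolding cara_solution_def by (simp add: scaleR_add_right)
  qed
qed

lemma lin_zero_sol:
  "cara_solution (lf A B e (\<lambda>t. 0)) 0 T (\<lambda>t. 0)"
  unfolding cara_solution_def lf_def by simp

lemma lin_zero:
  fixes A :: "real^'m^'m" and B :: "real^'k^'m"
  assumes e: "0 < e" and sol: "cara_solution (lf A B e u) 0 T y"
    and s: "s \<le> T" and u0: "\<And>t. t \<in> {0..s} \<Longrightarrow> u t = 0" and t: "t \<in> {0..s}"
  shows "y t = 0"
proof -
  obtain KA where KA: "0 < KA" "\<And>x. norm (A *v x) \<le> KA * norm x" by (rule matvec_bound[of A]) blast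
  have yc: "continuous_on {0..s} y" using continuous_on_subset[OF cara_cont[OF sol]] s by auto
  have "norm (y t) \<le> 0 * exp ((KA / e) * (t - 0))"
  proof (rule gronwall[where e="\<lambda>t. norm (y t)"])
    show "0 \<le> s" "continuous_on {0..s} (\<lambda>t. norm (y t))" "t \<in> {0..s}" "(0::real) \<le> 0" "0 < KA / e"
      using t yc KA e by (auto intro: continuous_intros)
    fix r assume r: "r \<in> {0..s}"
    have "norm (y r) = norm (integral {0..r} (\<lambda>\<sigma>. lf A B e u \<sigma> (y \<sigma>)))"
      using sol r s unfolding cara_solution_def by auto
    also have "\<dots> \<le> integral {0..r} (\<lambda>\<sigma>. (KA / e) * norm (y \<sigma>))"
    proof (rule integral_norm_bound_integral)
      show "(\<lambda>\<sigma>. lf A B e u \<sigma> (y \<sigma>)) integrable_on {0..r}" using cara_int[OF sol] r s by auto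
      show "(\<lambda>\<sigma>. KA / e * norm (y \<sigma>)) integrable_on {0..r}"
        using r by (intro integrable_continuous_interval continuous_intros continuous_on_subset[OF yc]) auto
      fix \<sigma> assume \<sigma>: "\<sigma> \<in> {0..r}"
      then have "u \<sigma> = 0" using u0 r by auto
      then have "norm (lf A B e u \<sigma> (y \<sigma>)) = (1 / e) * norm (A *v y \<sigma>)" using e by (simp add: lf_def)
      also have "\<dots> \<le> (1 / e) * (KA * norm (y \<sigma>))" using KA e by (intro mult_left_mono) auto
      finally show "norm (lf A B e u \<sigma> (y \<sigma>)) \<le> KA / e * norm (y \<sigma>)" by simp
    qed
    also have "\<dots> = 0 + KA / e * integral {0..r} (\<lambda>\<sigma>. norm (y \<sigma>))" by simp
    finally show "norm (y r) \<le> 0 + KA / e * integral {0..r} (\<lambda>\<sigma>. norm (y \<sigma>))" .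
  qed
  then show ?thesis by simp
qed

lemma lin_unique:
  fixes A :: "real^'m^'m" and B :: "real^'k^'m"
  assumes e: "0 < e" and s1: "cara_solution (lf A B e u) a T y1" and s2: "cara_solution (lf A B e u) a T y2"
    and t: "t \<in> {0..T}"
  shows "y1 t = y2 t"
proof -
  have "cara_solution (lf A B e (\<lambda>t. u t + (-1) *\<^sub>R u t)) (a + (-1) *\<^sub>R a) T (\<lambda>t. y1 t + (-1) *\<^sub>R y2 t)"
    by (intro lin_add s1 lin_scale s2)
  then have "cara_solution (lf A B e (\<lambda>t. u t + (-1) *\<^sub>R u t)) 0 T (\<lambda>t. y1 t + (-1) *\<^sub>R y2 t)" by simp
  from lin_zero[OF e this order_refl _ t] show ?thesis by simp
qed



lemma lin_hold:
  fixes A :: "real^'m^'m" and B :: "real^'k^'m"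
  assumes e: "0 < e" and sol: "cara_solution (lf A B e u) y0 T y"
    and ab: "0 \<le> a" "a \<le> b" "b \<le> T"
    and uR: "\<And>\<sigma>. \<sigma> \<in> {a<..<b} \<Longrightarrow> norm (u \<sigma>) \<le> R"
    and KA: "0 < KA" "\<And>x. norm (A *v x) \<le> KA * norm x"
    and KB: "0 \<le> KB" "\<And>x. norm (B *v x) \<le> KB * norm x"
    and t: "t \<in> {a..b}" and R: "0 \<le> R"
  shows "norm (y t - y a) \<le> (b - a) * ((KA * norm (y a) + KB * R) / e) * exp ((KA / e) * (b - a))"
proof -
  define F where "F = (\<lambda>\<sigma>. lf A B e u \<sigma> (y \<sigma>))"
  define K1 where "K1 = (KA * norm (y a) + KB * R) / e"
  define K2 where "K2 = KA / e"
  have K2: "0 < K2" using KA e by (simp add: K2_def)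
  have yc: "continuous_on {a..b} y" using continuous_on_subset[OF cara_cont[OF sol]] ab by auto
  have Fint: "F integrable_on {0..r}" if "r \<in> {0..T}" for r
    using cara_int[OF sol that] by (simp add: F_def)
  have diff: "y r - y a = integral {a..r} F" if r: "r \<in> {a..b}" for r
  proof -
    have "integral {0..a} F + integral {a..r} F = integral {0..r} F"
      using r ab by (intro Henstock_Kurzweil_Integration.integral_combine Fint[of r]) auto
    moreover have "y r = y0 + integral {0..r} F" "y a = y0 + integral {0..a} F"
      using sol r ab unfolding cara_solution_def F_def by auto
    ultimately show ?thesis by (simp add: algebra_simps)
  qed
  have "norm (y t - y a) \<le> ((b - a) * K1) * exp (K2 * (t - a))"
  proof (rule gronwall[where e="\<lambda>r. norm (y r - y a)"])
    show "a \<le> b" "t \<in> {a..b}" "0 < K2" using ab t K2 by auto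
    show "continuous_on {a..b} (\<lambda>r. norm (y r - y a))" by (intro continuous_intros yc)
    show "0 \<le> (b - a) * K1"
      using ab KA KB e R unfolding K1_def by (auto intro!: mult_nonneg_nonneg divide_nonneg_pos add_nonneg_nonneg)
  next
    fix r assume r: "r \<in> {a..b}"
    define F' where "F' = (\<lambda>\<sigma>. if \<sigma> \<in> {a<..<r} then F \<sigma> else 0)"
    have FF': "integral {a..r} F = integral {a..r} F'"
      by (rule integral_spike[where S="{a, r}"]) (auto simp: F'_def)
    have Fi: "F integrable_on {a..r}"
      using Fint[of r] r ab by (auto intro: integrable_on_subinterval)
    have F'i: "F' integrable_on {a..r}"
      by (rule integrable_spike_finite[where S="{a, r}", OF _ _ Fi]) (auto simp: F'_def)
    have ec: "continuous_on {a..r} (\<lambda>\<sigma>. norm (y \<sigma> - y a))"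
      using r by (intro continuous_intros continuous_on_subset[OF yc]) auto
    have "norm (y r - y a) = norm (integral {a..r} F')" using diff[OF r] FF' by simp
    also have "\<dots> \<le> integral {a..r} (\<lambda>\<sigma>. K1 + K2 * norm (y \<sigma> - y a))"
    proof (rule integral_norm_bound_integral[OF F'i])
      show "(\<lambda>\<sigma>. K1 + K2 * norm (y \<sigma> - y a)) integrable_on {a..r}"
        by (intro integrable_continuous_interval continuous_intros ec)
      fix \<sigma> assume \<sigma>: "\<sigma> \<in> {a..r}"
      show "norm (F' \<sigma>) \<le> K1 + K2 * norm (y \<sigma> - y a)"
      proof (cases "\<sigma> \<in> {a<..<r}")
        case True
        then have s2: "\<sigma> \<in> {a<..<b}" using r by auto
        have "norm (F \<sigma>) = (1 / e) * norm (A *v y \<sigma> + B *v u \<sigma>)" using e by (simp add: F_def lf_def)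
        also have "\<dots> \<le> (1 / e) * (KA * (norm (y \<sigma> - y a) + norm (y a)) + KB * R)"
        proof (rule mult_left_mono)
          have "norm (A *v y \<sigma> + B *v u \<sigma>) \<le> norm (A *v y \<sigma>) + norm (B *v u \<sigma>)" by (rule norm_triangle_ineq)
          also have "\<dots> \<le> KA * norm (y \<sigma>) + KB * norm (u \<sigma>)" using KA KB by (intro add_mono) auto
          also have "\<dots> \<le> KA * (norm (y \<sigma> - y a) + norm (y a)) + KB * R"
            using KA KB uR[OF s2] norm_triangle_ineq[of "y \<sigma> - y a" "y a"]
            by (intro add_mono mult_left_mono) auto
          finally show "norm (A *v y \<sigma> + B *v u \<sigma>) \<le> KA * (norm (y \<sigma> - y a) + norm (y a)) + KB * R" .
        qed (use e in auto)
        also have "\<dots> = K1 + K2 * norm (y \<sigma> - y a)"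
          by (simp add: K1_def K2_def add_divide_distrib[symmetric] algebra_simps)
        finally show ?thesis using True by (simp add: F'_def)
      next
        case False
        have "0 \<le> K1" using KA KB e R unfolding K1_def
          by (auto intro!: divide_nonneg_pos add_nonneg_nonneg mult_nonneg_nonneg)
        then show ?thesis using False K2 by (auto simp: F'_def)
      qed
    qed
    also have "\<dots> = (r - a) * K1 + K2 * integral {a..r} (\<lambda>\<sigma>. norm (y \<sigma> - y a))"
    proof -
      have i1: "(\<lambda>\<sigma>. K2 * norm (y \<sigma> - y a)) integrable_on {a..r}"
        by (intro integrable_continuous_interval continuous_intros ec)
      have "integral {a..r} (\<lambda>\<sigma>. K1 + K2 * norm (y \<sigma> - y a))
          = integral {a..r} (\<lambda>\<sigma>. K1) + integral {a..r} (\<lambda>\<sigma>. K2 * norm (y \<sigma> - y a))"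
        by (rule integral_add[OF integrable_const_ivl i1])
      then show ?thesis using r by simp
    qed
    also have "\<dots> \<le> (b - a) * K1 + K2 * integral {a..r} (\<lambda>\<sigma>. norm (y \<sigma> - y a))"
    proof -
      have "0 \<le> K1" using KA KB e R unfolding K1_def
        by (auto intro!: divide_nonneg_pos add_nonneg_nonneg mult_nonneg_nonneg)
      then have "(r - a) * K1 \<le> (b - a) * K1" using r
        by (auto intro!: mult_right_mono)
      then show ?thesis by simp
    qed
    finally show "norm (y r - y a) \<le> (b - a) * K1 + K2 * integral {a..r} (\<lambda>\<sigma>. norm (y \<sigma> - y a))" .
  qed
  also have "\<dots> \<le> ((b - a) * K1) * exp (K2 * (b - a))"
  proof (rule mult_left_mono)
    show "exp (K2 * (t - a)) \<le> exp (K2 * (b - a))" using t K2 by (auto intro: mult_left_mono)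
    show "0 \<le> (b - a) * K1"
      using ab KA KB e R unfolding K1_def by (auto intro!: mult_nonneg_nonneg divide_nonneg_pos add_nonneg_nonneg)
  qed
  finally show ?thesis by (simp add: K1_def K2_def)
qed



lemma mat_pow_comm: "mat_pow A j ** A = A ** mat_pow A j"
  by (induction j) (simp_all, metis matrix_mul_assoc)

lemma kalman_perp:
  fixes A :: "real^'m^'m" and B :: "real^'k^'m"
  assumes rank: "kalman_rank A B = CARD('m)"
    and perp: "\<And>j c. v \<bullet> (mat_pow A j *v (B *v c)) = 0"
  shows "v = 0"
proof -
  define U where "U = (\<Union>i<CARD('m). columns (mat_pow A i ** B))"
  have d1: "dim U = CARD('m)" using rank unfolding kalman_rank_def U_def by simp
  have d2: "DIM(real^'m) = CARD('m)" by simp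
  have sp: "span U = UNIV" using dim_eq_full[of U] d1 d2 by simp
  have "orthogonal v x" if "x \<in> U" for x
  proof -
    from that obtain i j where "x = column j (mat_pow A i ** B)"
      unfolding U_def columns_def by blast
    then have "x = mat_pow A i *v (B *v axis j 1)"
      by (simp only: matrix_vector_mult_basis[symmetric] matrix_vector_mul_assoc)
    then show ?thesis using perp by (simp add: orthogonal_def)
  qed
  then have "orthogonal v v" using sp by (intro orthogonal_to_span[of v]) auto
  then show ?thesis by (simp add: orthogonal_def)
qed

lemma deriv_arg:
  fixes A :: "real^'m^'m" and B :: "real^'k^'m" and \<tau> :: real
  assumes e: "0 < e" and tau: "0 < \<tau>" and Yc: "continuous_on {0..\<tau>} Y"
    and Yeq: "\<And>r. r \<in> {0..\<tau>} \<Longrightarrow> Y r = integral {0..r} (\<lambda>\<sigma>. (1 / e) *\<^sub>R (A *v Y \<sigma> + B *v c))"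
    and perp: "\<And>r. r \<in> {0..\<tau>} \<Longrightarrow> v \<bullet> Y r = 0"
  shows "v \<bullet> (mat_pow A j *v (B *v c)) = 0"
proof -
  define G where "G = (\<lambda>\<sigma>. (1 / e) *\<^sub>R (A *v Y \<sigma> + B *v c))"
  have cA: "continuous_on {0..\<tau>} (\<lambda>\<sigma>. A *v Y \<sigma>)"
    by (rule linear_continuous_on_compose[OF Yc]) (simp add: matrix_vector_mul_linear)
  have Gc: "continuous_on {0..\<tau>} G" unfolding G_def
    by (intro continuous_intros cA)
  have z: "0 \<in> {0..\<tau>}" using tau by simp
  have Y0: "Y 0 = 0" using Yeq[OF z] by simp
  have step: "v \<bullet> (mat_pow A j *v (B *v c)) = 0 \<and> (\<forall>r\<in>{0..\<tau>}. v \<bullet> (mat_pow A (Suc j) *v Y r) = 0)"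
    if P: "\<forall>r\<in>{0..\<tau>}. v \<bullet> (mat_pow A j *v Y r) = 0" for j
  proof -
    define l where "l = (\<lambda>x. v \<bullet> (mat_pow A j *v x))"
    have bl: "bounded_linear l" unfolding l_def
      by (intro bounded_linear_compose[OF bounded_linear_inner_right matrix_vector_mul_bounded_linear])
    define h where "h = (\<lambda>\<sigma>. l (G \<sigma>))"
    have hc: "continuous_on {0..\<tau>} h" unfolding h_def
      by (intro linear_continuous_on_compose[OF Gc bounded_linear.linear[OF bl]])
    have hint: "integral {0..r} h = 0" if r: "r \<in> {0..\<tau>}" for r
    proof -
      have "integral {0..r} h = l (integral {0..r} G)" unfolding h_def
        using integral_linear[OF integrable_continuous_interval[OF continuous_on_subset[OF Gc]] bl, of 0 r] r
        by (simp add: o_def)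
      also have "\<dots> = l (Y r)" using Yeq[OF r] by (simp add: G_def)
      also have "\<dots> = 0" using P r by (simp add: l_def)
      finally show ?thesis .
    qed
    have h0: "h r = 0" if r: "r \<in> {0..\<tau>}" for r
    proof -
      have d1: "((\<lambda>u. integral {0..u} h) has_vector_derivative h r) (at r within {0..\<tau>})"
        by (rule integral_has_vector_derivative[OF hc r])
      have d2: "((\<lambda>u. integral {0..u} h) has_vector_derivative 0) (at r within {0..\<tau>})"
        by (rule has_vector_derivative_transform[OF r _ has_vector_derivative_const]) (simp add: hint)
      have "r \<in> cbox 0 \<tau>" using r by simp
      from vector_derivative_unique_within_closed_interval[of 0 \<tau> r, OF tau this] d1 d2
      show ?thesis by simp
    qed
    have lin: "l (x + y) = l x + l y" "l (a *\<^sub>R x) = a * l x" "l 0 = 0" for x y a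
      by (simp_all add: l_def matrix_vector_right_distrib inner_add_right matrix_vector_mult_scaleR)
    have lBc: "l (B *v c) = 0"
      using h0[of 0] tau Y0 e by (simp add: h_def G_def lin)
    moreover have "\<forall>r\<in>{0..\<tau>}. v \<bullet> (mat_pow A (Suc j) *v Y r) = 0"
    proof
      fix r assume r: "r \<in> {0..\<tau>}"
      have "l (A *v Y r) = 0" using h0[OF r] lBc e by (simp add: h_def G_def lin)
      moreover have "l (A *v Y r) = v \<bullet> (mat_pow A (Suc j) *v Y r)"
        by (simp add: l_def matrix_vector_mul_assoc mat_pow_comm)
      ultimately show "v \<bullet> (mat_pow A (Suc j) *v Y r) = 0" by simp
    qed
    ultimately show ?thesis by (simp add: l_def)
  qed
  have "\<forall>r\<in>{0..\<tau>}. v \<bullet> (mat_pow A j *v Y r) = 0" for j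
  proof (induction j)
    case 0 then show ?case using perp by simp
  next
    case (Suc j) then show ?case using step by blast
  qed
  then show ?thesis using step by blast
qed



lemma lin_reach:
  fixes A :: "real^'m^'m" and B :: "real^'k^'m"
  assumes e: "0 < e" and rank: "kalman_rank A B = CARD('m)"
    and s: "0 \<le> s" and tau: "0 < \<tau>" and sT: "s + \<tau> \<le> T"
  shows "\<exists>w y. meas_on T w \<and> (\<exists>R. \<forall>t. norm (w t) \<le> R) \<and> (\<forall>t. t < s \<or> s + \<tau> < t \<longrightarrow> w t = 0)
     \<and> cara_solution (lf A B e w) 0 T y \<and> y (s + \<tau>) = d"
proof -
  obtain KA where KA: "0 < KA" "\<And>x. norm (A *v x) \<le> KA * norm x" by (rule matvec_bound[of A]) blast
  obtain KB where KB: "0 < KB" "\<And>x. norm (B *v x) \<le> KB * norm x" by (rule matvec_bound[of B]) blast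
  have T: "0 \<le> T" using s tau sT by simp
  define Rch where "Rch = {y (s + \<tau>) | w y. meas_on T w \<and> (\<exists>R. \<forall>t. norm (w t) \<le> R)
      \<and> (\<forall>t. t < s \<or> s + \<tau> < t \<longrightarrow> w t = 0) \<and> cara_solution (lf A B e w) 0 T y}"
  have sub: "subspace Rch"
    unfolding subspace_def
  proof (intro conjI ballI allI)
    show "0 \<in> Rch" unfolding Rch_def
      by (rule CollectI, rule exI[of _ "\<lambda>t. 0"], rule exI[of _ "\<lambda>t. 0"])
        (auto simp: lin_zero_sol meas_on_def)
  next
    fix x y assume "x \<in> Rch" "y \<in> Rch"
    then obtain w1 y1 w2 y2 R1 R2 where
      h1: "x = y1 (s + \<tau>)" "meas_on T w1" "\<forall>t. norm (w1 t) \<le> R1" "\<forall>t. t < s \<or> s + \<tau> < t \<longrightarrow> w1 t = 0"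
          "cara_solution (lf A B e w1) 0 T y1"
      and h2: "y = y2 (s + \<tau>)" "meas_on T w2" "\<forall>t. norm (w2 t) \<le> R2" "\<forall>t. t < s \<or> s + \<tau> < t \<longrightarrow> w2 t = 0"
          "cara_solution (lf A B e w2) 0 T y2"
      unfolding Rch_def by blast
    have "cara_solution (lf A B e (\<lambda>t. w1 t + w2 t)) (0 + 0) T (\<lambda>t. y1 t + y2 t)"
      by (rule lin_add[OF h1(5) h2(5)])
    moreover have "meas_on T (\<lambda>t. w1 t + w2 t)" using h1(2) h2(2) by (simp add: meas_on_def)
    moreover have "\<forall>t. norm (w1 t + w2 t) \<le> R1 + R2"
      using h1(3) h2(3) by (meson add_mono norm_triangle_le)
    moreover have "\<forall>t. t < s \<or> s + \<tau> < t \<longrightarrow> w1 t + w2 t = 0" using h1(4) h2(4) by simp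
    ultimately show "x + y \<in> Rch" unfolding Rch_def mem_Collect_eq
      by (intro exI[of _ "\<lambda>t. w1 t + w2 t"] exI[of _ "\<lambda>t. y1 t + y2 t"]) (simp add: h1(1) h2(1), blast)
  next
    fix c :: real and x assume "x \<in> Rch"
    then obtain w1 y1 R1 where
      h1: "x = y1 (s + \<tau>)" "meas_on T w1" "\<forall>t. norm (w1 t) \<le> R1" "\<forall>t. t < s \<or> s + \<tau> < t \<longrightarrow> w1 t = 0"
          "cara_solution (lf A B e w1) 0 T y1"
      unfolding Rch_def by blast
    have "cara_solution (lf A B e (\<lambda>t. c *\<^sub>R w1 t)) (c *\<^sub>R 0) T (\<lambda>t. c *\<^sub>R y1 t)"
      by (rule lin_scale[OF h1(5)])
    moreover have "meas_on T (\<lambda>t. c *\<^sub>R w1 t)" using h1(2) by (simp add: meas_on_def)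
    moreover have "\<forall>t. norm (c *\<^sub>R w1 t) \<le> \<bar>c\<bar> * R1"
      using h1(3) by (simp add: mult_left_mono)
    moreover have "\<forall>t. t < s \<or> s + \<tau> < t \<longrightarrow> c *\<^sub>R w1 t = 0" using h1(4) by simp
    ultimately show "c *\<^sub>R x \<in> Rch" unfolding Rch_def mem_Collect_eq
      by (intro exI[of _ "\<lambda>t. c *\<^sub>R w1 t"] exI[of _ "\<lambda>t. c *\<^sub>R y1 t"]) (simp add: h1(1), blast)
  qed
  have "Rch = UNIV"
  proof (rule ccontr)
    assume ne: "Rch \<noteq> UNIV"
    have "dim Rch < DIM(real^'m)"
    proof -
      have spR: "span Rch = Rch" using sub by (simp add: span_eq_iff)
      have "dim Rch \<noteq> DIM(real^'m)"
      proof
        assume "dim Rch = DIM(real^'m)"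
        then have "span Rch = UNIV" by (simp only: dim_eq_full)
        then show False using ne spR by simp
      qed
      moreover have "dim Rch \<le> DIM(real^'m)" by (rule dim_subset_UNIV)
      ultimately show ?thesis by simp
    qed
    then obtain v :: "real^'m" where v: "v \<noteq> 0" "\<And>y. y \<in> span Rch \<Longrightarrow> orthogonal v y"
      using orthogonal_to_subspace_exists by blast
    have "v = 0"
    proof (rule kalman_perp[OF rank])
      fix j c
      have "\<exists>Yc. cara_solution (lf A B e (\<lambda>t. c)) 0 T Yc"
        by (rule lin_exists[OF e T, where R="norm c"]) (auto simp: meas_on_def)
      then obtain Yc where Ycs: "cara_solution (lf A B e (\<lambda>t. c)) 0 T Yc" by blast
      have Ycc: "continuous_on {0..T} Yc" by (rule cara_cont[OF Ycs])
      have Yc0: "Yc 0 = 0" using Ycs T unfolding cara_solution_def by auto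
      have inR: "Yc r \<in> Rch" if r: "r \<in> {0..\<tau>}" for r
      proof -
        define t0 where "t0 = s + \<tau> - r"
        have t0: "s \<le> t0" "t0 \<le> s + \<tau>" using r by (auto simp: t0_def)
        define w where "w = (\<lambda>t. indicator {t0<..s + \<tau>} t *\<^sub>R c)"
        have wb: "w \<in> borel_measurable borel" unfolding w_def by measurable
        have wm: "meas_on T w" unfolding meas_on_def by (rule borel_to_lebon[OF wb])
        have wR: "\<forall>t. norm (w t) \<le> norm c" by (simp add: w_def indicator_def)
        have wz: "\<forall>t. t < s \<or> s + \<tau> < t \<longrightarrow> w t = 0" using t0 by (auto simp: w_def)
        obtain y where ys: "cara_solution (lf A B e w) 0 T y"
          using lin_exists[OF e T wm, of "norm c"] wR by blast
        define yt where "yt = (\<lambda>t. Yc (max 0 (t - t0)))"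
        define F where "F = (\<lambda>\<sigma>. lf A B e w \<sigma> (yt \<sigma>))"
        define H where "H = (\<lambda>\<rho>. lf A B e (\<lambda>t. c) \<rho> (Yc \<rho>))"
        have ytc: "continuous_on {0..s + \<tau>} yt"
          unfolding yt_def
          by (rule continuous_on_compose2[OF Ycc]) (use t0 sT r s in \<open>auto intro!: continuous_intros\<close>)
        obtain Bd where Bd: "\<And>t. t \<in> {0..s + \<tau>} \<Longrightarrow> norm (yt t) \<le> Bd"
        proof -
          have "compact (yt ` {0..s + \<tau>})" by (rule compact_continuous_image[OF ytc]) auto
          then show ?thesis using that by (meson compact_imp_bounded bounded_iff imageI)
        qed
        have Fm: "F \<in> borel_measurable (lebesgue_on {0..s + \<tau>})"
        proof -
          have "(\<lambda>\<sigma>. A *v yt \<sigma>) \<in> borel_measurable (lebesgue_on {0..s + \<tau>})"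
            by (rule continuous_imp_measurable_on_sets_lebesgue)
              (auto intro: linear_continuous_on_compose[OF ytc] simp: matrix_vector_mul_linear)
          moreover have "(\<lambda>\<sigma>. B *v w \<sigma>) \<in> borel_measurable (lebesgue_on {0..s + \<tau>})"
            by (rule borel_to_lebon) (intro measurable_compose[OF wb] borel_measurable_continuous_onI
               linear_continuous_on matrix_vector_mul_bounded_linear)
          ultimately show ?thesis unfolding F_def lf_def by (intro borel_measurable_scaleR borel_measurable_add) auto
        qed
        have Fai: "F absolutely_integrable_on {0..s + \<tau>}"
        proof (rule bdd_meas_abs_int[OF Fm])
          fix \<sigma> assume \<sigma>: "\<sigma> \<in> {0..s + \<tau>}"
          have "norm (F \<sigma>) = (1 / e) * norm (A *v yt \<sigma> + B *v w \<sigma>)" using e by (simp add: F_def lf_def)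
          also have "\<dots> \<le> (1 / e) * (KA * Bd + KB * norm c)"
          proof (rule mult_left_mono)
            have "norm (A *v yt \<sigma> + B *v w \<sigma>) \<le> norm (A *v yt \<sigma>) + norm (B *v w \<sigma>)" by (rule norm_triangle_ineq)
            also have "\<dots> \<le> KA * norm (yt \<sigma>) + KB * norm (w \<sigma>)" using KA KB by (intro add_mono) auto
            also have "\<dots> \<le> KA * Bd + KB * norm c" using KA KB Bd[OF \<sigma>] wR
              by (intro add_mono mult_left_mono) (auto simp: less_imp_le)
            finally show "norm (A *v yt \<sigma> + B *v w \<sigma>) \<le> KA * Bd + KB * norm c" .
          qed (use e in auto)
          finally show "norm (F \<sigma>) \<le> (1 / e) * (KA * Bd + KB * norm c)" .
        qed
        have F0: "F \<sigma> = 0" if "\<sigma> \<le> t0" for \<sigma>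
          using that Yc0 by (simp add: F_def lf_def yt_def w_def)
        have ytsol: "cara_solution (lf A B e w) 0 (s + \<tau>) yt"
          unfolding cara_solution_def
        proof (intro conjI ballI)
          show "(\<lambda>\<sigma>. lf A B e w \<sigma> (yt \<sigma>)) absolutely_integrable_on {0..s + \<tau>}"
            using Fai by (simp add: F_def)
          fix t assume t: "t \<in> {0..s + \<tau>}"
          have Fi: "F integrable_on {0..t}"
            using integrable_on_subinterval[OF absolutely_integrable_on_def[THEN iffD1, OF Fai, THEN conjunct1]] t
            by auto
          have Feq: "(\<lambda>\<sigma>. lf A B e w \<sigma> (yt \<sigma>)) = F" by (simp add: F_def)
          have "yt t = integral {0..t} F"
          proof (cases "t \<le> t0")
            case True
            have "integral {0..t} F = integral {0..t} (\<lambda>\<sigma>. 0)"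
              by (rule integral_cong) (use True F0 in auto)
            then show ?thesis using True Yc0 by (simp add: yt_def)
          next
            case False
            have "integral {0..t} F = integral {0..t0} F + integral {t0..t} F"
              using False t0 s by (intro Henstock_Kurzweil_Integration.integral_combine[symmetric] Fi) auto
            also have "integral {0..t0} F = 0"
            proof -
              have "integral {0..t0} F = integral {0..t0} (\<lambda>\<sigma>. 0)"
                by (rule integral_cong) (use F0 in auto)
              then show ?thesis by simp
            qed
            also have "integral {t0..t} F = integral {t0..t} (\<lambda>\<sigma>. H (\<sigma> - t0))"
            proof (rule integral_spike[where S="{t0}"])
              fix \<sigma> assume "\<sigma> \<in> {t0..t} - {t0}"
              then have "t0 < \<sigma>" "\<sigma> \<le> s + \<tau>" using t by auto
              then show "H (\<sigma> - t0) = F \<sigma>" by (simp add: F_def H_def lf_def yt_def w_def)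
            qed auto
            also have "\<dots> = integral {0..t - t0} H"
              using integral_shift_real_ivl[where f=H and a=0 and b="t - t0" and c="-t0"] by simp
            also have "\<dots> = Yc (t - t0)"
            proof -
              have "t - t0 \<in> {0..T}" using False t r s sT by (auto simp: t0_def)
              then show ?thesis using Ycs unfolding cara_solution_def H_def by auto
            qed
            finally show ?thesis using False by (simp add: yt_def)
          qed
          then show "yt t = 0 + integral {0..t} (\<lambda>\<sigma>. lf A B e w \<sigma> (yt \<sigma>))"
            unfolding Feq by simp
        qed
        have "y (s + \<tau>) = yt (s + \<tau>)"
          by (rule lin_unique[OF e cara_restrict[OF ys sT] ytsol]) (use s tau in auto)
        also have "\<dots> = Yc r" using r by (simp add: yt_def t0_def)
        finally have "Yc r = y (s + \<tau>)" by simp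
        then show ?thesis unfolding Rch_def using wm wR wz ys by blast
      qed
      show "v \<bullet> (mat_pow A j *v (B *v c)) = 0"
      proof (rule deriv_arg[OF e tau, where Y=Yc])
        show "continuous_on {0..\<tau>} Yc" using continuous_on_subset[OF Ycc] s sT by auto
        fix r assume r: "r \<in> {0..\<tau>}"
        show "Yc r = integral {0..r} (\<lambda>\<sigma>. (1 / e) *\<^sub>R (A *v Yc \<sigma> + B *v c))"
          using Ycs r s sT unfolding cara_solution_def lf_def by auto
        show "v \<bullet> Yc r = 0" using v(2)[OF span_base[OF inR[OF r]]] by (simp add: orthogonal_def)
      qed
    qed
    with v(1) show False by simp
  qed
  then have "d \<in> Rch" by simp
  then show ?thesis unfolding Rch_def by blast
qed



lemma lin_windows:
  fixes A :: "real^'m^'m" and B :: "real^'k^'m"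
  assumes e: "0 < e" and rank: "kalman_rank A B = CARD('m)"
    and h: "0 < h" and tau: "0 < \<tau>" "\<tau> < h" and NhT: "real N * h = T"
    and uhm: "meas_on T uh" and uhR: "\<And>t. norm (uh t) \<le> R"
  shows "\<exists>u y. meas_on T u \<and> (\<exists>R'. \<forall>t. norm (u t) \<le> R')
     \<and> (\<forall>t. (\<forall>j<N. t < real j * h \<or> real j * h + \<tau> < t) \<longrightarrow> u t = uh t)
     \<and> cara_solution (lf A B e u) y0 T y \<and> (\<forall>j<N. y (real j * h + \<tau>) = c j)"
proof -
  have T: "0 \<le> T" using NhT h by auto
  have "n \<le> N \<Longrightarrow> \<exists>u y. meas_on T u \<and> (\<exists>R'. \<forall>t. norm (u t) \<le> R')
     \<and> (\<forall>t. (\<forall>j<n. t < real j * h \<or> real j * h + \<tau> < t) \<longrightarrow> u t = uh t)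
     \<and> cara_solution (lf A B e u) y0 T y \<and> (\<forall>j<n. y (real j * h + \<tau>) = c j)" for n
  proof (induction n)
    case 0
    obtain y where "cara_solution (lf A B e uh) y0 T y" using lin_exists[OF e T uhm uhR] by blast
    then show ?case using uhm uhR by blast
  next
    case (Suc n)
    then obtain u y R' where IH: "meas_on T u" "\<forall>t. norm (u t) \<le> R'"
      "\<forall>t. (\<forall>j<n. t < real j * h \<or> real j * h + \<tau> < t) \<longrightarrow> u t = uh t"
      "cara_solution (lf A B e u) y0 T y" "\<forall>j<n. y (real j * h + \<tau>) = c j"
      by auto
    have nN: "n < N" using Suc.prems by simp
    have sT: "real n * h + \<tau> \<le> T"
    proof -
      have "real n * h + \<tau> \<le> real n * h + h" using tau by simp
      also have "\<dots> = real (Suc n) * h" by (simp add: algebra_simps)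
      also have "\<dots> \<le> real N * h" using nN h by (intro mult_right_mono) auto
      finally show ?thesis using NhT by simp
    qed
    obtain w yw Rw where W: "meas_on T w" "\<forall>t. norm (w t) \<le> Rw"
      "\<forall>t. t < real n * h \<or> real n * h + \<tau> < t \<longrightarrow> w t = 0"
      "cara_solution (lf A B e w) 0 T yw" "yw (real n * h + \<tau>) = c n - y (real n * h + \<tau>)"
      using lin_reach[OF e rank _ tau(1) sT, of "c n - y (real n * h + \<tau>)"] h by auto
    have sol: "cara_solution (lf A B e (\<lambda>t. u t + w t)) (y0 + 0) T (\<lambda>t. y t + yw t)"
      by (rule lin_add[OF IH(4) W(4)])
    have yw0: "yw (real j * h + \<tau>) = 0" if j: "j < n" for j
    proof (rule lin_zero[OF e W(4)])
      have "real j * h + \<tau> < real j * h + h" using tau by simp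
      also have "\<dots> = real (Suc j) * h" by (simp add: algebra_simps)
      also have "\<dots> \<le> real n * h" using j h by (intro mult_right_mono) auto
      finally have lt: "real j * h + \<tau> < real n * h" .
      show "real j * h + \<tau> \<le> T" using lt sT tau by simp
      show "real j * h + \<tau> \<in> {0..real j * h + \<tau>}" using h tau by auto
      fix t assume "t \<in> {0..real j * h + \<tau>}"
      then show "w t = 0" using W(3) lt by auto
    qed
    show ?case
    proof (intro exI conjI)
      show "meas_on T (\<lambda>t. u t + w t)" using IH(1) W(1) by (simp add: meas_on_def)
      show "\<forall>t. norm (u t + w t) \<le> R' + Rw" using IH(2) W(2) by (meson add_mono norm_triangle_le)
      show "\<forall>t. (\<forall>j<Suc n. t < real j * h \<or> real j * h + \<tau> < t) \<longrightarrow> u t + w t = uh t"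
        using IH(3) W(3) by (auto simp: less_Suc_eq)
      show "cara_solution (lf A B e (\<lambda>t. u t + w t)) y0 T (\<lambda>t. y t + yw t)" using sol by simp
      show "\<forall>j<Suc n. y (real j * h + \<tau>) + yw (real j * h + \<tau>) = c j"
        using IH(5) W(5) yw0 by (auto simp: less_Suc_eq)
    qed
  qed
  from this[OF order_refl] show ?thesis .
qed



lemma g_comp_meas:
  fixes g :: "'a::euclidean_space \<Rightarrow> 'b::euclidean_space \<Rightarrow> 'c::euclidean_space \<Rightarrow> 'd::euclidean_space"
  assumes gm: "(\<lambda>(u, y, z). g u y z) \<in> borel_measurable borel"
    and um: "u \<in> borel_measurable M" and ym: "y \<in> borel_measurable M" and xm: "x \<in> borel_measurable M"
  shows "(\<lambda>s. g (u s) (y s) (x s)) \<in> borel_measurable M"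
proof -
  have yx: "(\<lambda>s. (y s, x s)) \<in> M \<rightarrow>\<^sub>M borel"
    using measurable_Pair[OF ym xm] by (simp add: borel_prod)
  have "(\<lambda>s. (u s, y s, x s)) \<in> M \<rightarrow>\<^sub>M borel"
    using measurable_Pair[OF um yx] by (simp add: borel_prod)
  from measurable_compose[OF this gm] show ?thesis by simp
qed

lemma z_exists:
  fixes g :: "'a::euclidean_space \<Rightarrow> 'b::euclidean_space \<Rightarrow> 'c::euclidean_space \<Rightarrow> 'c"
  assumes gm: "(\<lambda>(u, y, z). g u y z) \<in> borel_measurable borel"
    and gl: "\<And>u y z y' z'. norm (g u y z - g u y' z') \<le> L * norm ((y, z) - (y', z'))"
    and gb: "\<And>u y z. norm (g u y z) \<le> Mg"
    and T: "0 \<le> T" and um: "u \<in> borel_measurable (lebesgue_on {0..T})" and ym: "y \<in> borel_measurable (lebesgue_on {0..T})"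
  shows "\<exists>z. cara_solution (\<lambda>t z. g (u t) (y t) z) z0 T z"
proof -
  have "\<exists>z. cara_solution (\<lambda>t z. g (u t) (y t) z) z0 T z \<and> continuous_on {0..T} z"
  proof (rule picard_solution_exists[where L="\<bar>L\<bar> + 1" and M=Mg])
    show "0 \<le> T" "0 < \<bar>L\<bar> + 1" using T by auto
  next
    fix x :: "real \<Rightarrow> 'c" assume xc: "continuous_on {0..T} x"
    have "x \<in> borel_measurable (lebesgue_on {0..T})"
      by (rule continuous_imp_measurable_on_sets_lebesgue[OF xc]) auto
    then show "(\<lambda>s. g (u s) (y s) (x s)) \<in> borel_measurable (lebesgue_on {0..T})"
      by (rule g_comp_meas[OF gm um ym])
  next
    fix s x x'
    have "norm (g (u s) (y s) x - g (u s) (y s) x') \<le> L * norm ((y s, x) - (y s, x'))" by (rule gl)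
    also have "\<dots> = L * norm (x - x')" by (simp add: norm_Pair)
    also have "\<dots> \<le> (\<bar>L\<bar> + 1) * norm (x - x')" by (intro mult_right_mono) auto
    finally show "norm (g (u s) (y s) x - g (u s) (y s) x') \<le> (\<bar>L\<bar> + 1) * norm (x - x')" .
  next
    fix s show "norm (g (u s) (y s) z0) \<le> Mg" by (rule gb)
  qed
  then show ?thesis by blast
qed

lemma z_stab:
  fixes g :: "'a::euclidean_space \<Rightarrow> 'b::euclidean_space \<Rightarrow> 'c::euclidean_space \<Rightarrow> 'c"
  assumes gm: "(\<lambda>(u, y, z). g u y z) \<in> borel_measurable borel"
    and gl: "\<And>u y z y' z'. norm (g u y z - g u y' z') \<le> L * norm ((y, z) - (y', z'))"
    and gb: "\<And>u y z. norm (g u y z) \<le> Mg"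
    and T: "0 \<le> T"
    and u1m: "u1 \<in> borel_measurable (lebesgue_on {0..T})" and y1m: "y1 \<in> borel_measurable (lebesgue_on {0..T})"
    and u2m: "u2 \<in> borel_measurable (lebesgue_on {0..T})" and y2m: "y2 \<in> borel_measurable (lebesgue_on {0..T})"
    and s1: "cara_solution (\<lambda>t z. g (u1 t) (y1 t) z) z0 T z1"
    and s2: "cara_solution (\<lambda>t z. g (u2 t) (y2 t) z) z0 T z2"
  shows "norm (z1 T - z2 T) \<le> integral {0..T} (\<lambda>s. norm (g (u1 s) (y1 s) (z2 s) - g (u2 s) (y2 s) (z2 s))) * exp ((\<bar>L\<bar> + 1) * T)"
proof -
  define D where "D = (\<lambda>s. norm (g (u1 s) (y1 s) (z2 s) - g (u2 s) (y2 s) (z2 s)))"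
  define K where "K = \<bar>L\<bar> + 1"
  have K: "0 < K" by (simp add: K_def)
  have z1c: "continuous_on {0..T} z1" by (rule cara_cont[OF s1])
  have z2c: "continuous_on {0..T} z2" by (rule cara_cont[OF s2])
  have z2m: "z2 \<in> borel_measurable (lebesgue_on {0..T})"
    by (rule continuous_imp_measurable_on_sets_lebesgue[OF z2c]) auto
  have Dm: "D \<in> borel_measurable (lebesgue_on {0..T})"
  proof -
    have "(\<lambda>s. g (u1 s) (y1 s) (z2 s)) \<in> borel_measurable (lebesgue_on {0..T})"
      by (rule g_comp_meas[OF gm u1m y1m z2m])
    moreover have "(\<lambda>s. g (u2 s) (y2 s) (z2 s)) \<in> borel_measurable (lebesgue_on {0..T})"
      by (rule g_comp_meas[OF gm u2m y2m z2m])
    ultimately show ?thesis unfolding D_def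
      by (intro measurable_compose[OF _ borel_measurable_norm] borel_measurable_diff)
  qed
  have Dai: "D absolutely_integrable_on {0..T}"
  proof (rule bdd_meas_abs_int[OF Dm])
    fix s
    have "D s \<le> norm (g (u1 s) (y1 s) (z2 s)) + norm (g (u2 s) (y2 s) (z2 s))"
      unfolding D_def by (rule norm_triangle_ineq4)
    also have "\<dots> \<le> Mg + Mg" using gb by (intro add_mono)
    finally show "norm (D s) \<le> Mg + Mg" by (simp add: D_def)
  qed
  have Dint: "D integrable_on {0..t}" if "t \<in> {0..T}" for t
    using integrable_on_subinterval[OF absolutely_integrable_on_def[THEN iffD1, OF Dai, THEN conjunct1]] that
    by auto
  have D0: "0 \<le> D s" for s by (simp add: D_def)
  have DT: "integral {0..t} D \<le> integral {0..T} D" if t: "t \<in> {0..T}" for t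
  proof -
    have "integral {0..t} D + integral {t..T} D = integral {0..T} D"
      using t by (intro Henstock_Kurzweil_Integration.integral_combine Dint[of T]) auto
    moreover have "0 \<le> integral {t..T} D"
      using t D0 by (intro integral_nonneg integrable_on_subinterval[OF Dint[of T]]) auto
    ultimately show ?thesis by simp
  qed
  have "norm (z1 T - z2 T) \<le> integral {0..T} D * exp (K * (T - 0))"
  proof (rule gronwall[where e="\<lambda>t. norm (z1 t - z2 t)"])
    show "0 \<le> T" "continuous_on {0..T} (\<lambda>t. norm (z1 t - z2 t))" "T \<in> {0..T}" "0 < K"
      using T K by (auto intro!: continuous_intros z1c z2c)
    show "0 \<le> integral {0..T} D" using D0 Dint[of T] T by (intro integral_nonneg) auto
  next
    fix t assume t: "t \<in> {0..T}"
    have i1: "(\<lambda>s. g (u1 s) (y1 s) (z1 s)) integrable_on {0..t}" using cara_int[OF s1 t] by simp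
    have i2: "(\<lambda>s. g (u2 s) (y2 s) (z2 s)) integrable_on {0..t}" using cara_int[OF s2 t] by simp
    have ec: "continuous_on {0..t} (\<lambda>s. norm (z1 s - z2 s))"
      using t by (intro continuous_intros continuous_on_subset[OF z1c] continuous_on_subset[OF z2c]) auto
    have "norm (z1 t - z2 t) = norm (integral {0..t} (\<lambda>s. g (u1 s) (y1 s) (z1 s) - g (u2 s) (y2 s) (z2 s)))"
      using s1 s2 t i1 i2 unfolding cara_solution_def by (simp add: integral_diff)
    also have "\<dots> \<le> integral {0..t} (\<lambda>s. K * norm (z1 s - z2 s) + D s)"
    proof (rule integral_norm_bound_integral[OF integrable_diff[OF i1 i2]])
      show "(\<lambda>s. K * norm (z1 s - z2 s) + D s) integrable_on {0..t}"
        by (intro integrable_add integrable_continuous_interval continuous_intros ec Dint t)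
      fix s assume s: "s \<in> {0..t}"
      have "norm (g (u1 s) (y1 s) (z1 s) - g (u2 s) (y2 s) (z2 s))
          \<le> norm (g (u1 s) (y1 s) (z1 s) - g (u1 s) (y1 s) (z2 s)) + D s"
        unfolding D_def by (rule norm_diff_triangle_le) auto
      also have "norm (g (u1 s) (y1 s) (z1 s) - g (u1 s) (y1 s) (z2 s)) \<le> K * norm (z1 s - z2 s)"
      proof -
        have "norm (g (u1 s) (y1 s) (z1 s) - g (u1 s) (y1 s) (z2 s)) \<le> L * norm ((y1 s, z1 s) - (y1 s, z2 s))"
          by (rule gl)
        also have "\<dots> = L * norm (z1 s - z2 s)" by (simp add: norm_Pair)
        also have "\<dots> \<le> K * norm (z1 s - z2 s)" unfolding K_def by (intro mult_right_mono) auto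
        finally show ?thesis .
      qed
      finally show "norm (g (u1 s) (y1 s) (z1 s) - g (u2 s) (y2 s) (z2 s)) \<le> K * norm (z1 s - z2 s) + D s"
        by simp
    qed
    also have "\<dots> = K * integral {0..t} (\<lambda>s. norm (z1 s - z2 s)) + integral {0..t} D"
    proof -
      have ie: "(\<lambda>s. K * norm (z1 s - z2 s)) integrable_on {0..t}"
        by (intro integrable_continuous_interval continuous_intros ec)
      have "integral {0..t} (\<lambda>s. K * norm (z1 s - z2 s) + D s)
          = integral {0..t} (\<lambda>s. K * norm (z1 s - z2 s)) + integral {0..t} D"
        by (rule integral_add[OF ie Dint[OF t]])
      then show ?thesis by simp
    qed
    also have "\<dots> \<le> integral {0..T} D + K * integral {0..t} (\<lambda>s. norm (z1 s - z2 s))"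
      using DT[OF t] by simp
    finally show "norm (z1 t - z2 t) \<le> integral {0..T} D + K * integral {0..t} (\<lambda>s. norm (z1 s - z2 s))" .
  qed
  then show ?thesis by (simp add: D_def K_def)
qed



lemma int_of_bdd_meas:
  fixes f :: "real \<Rightarrow> 'a::euclidean_space"
  assumes "f \<in> borel_measurable (lebesgue_on {a..b})" "\<And>s. s \<in> {a..b} \<Longrightarrow> norm (f s) \<le> B"
  shows "f integrable_on {a..b}"
  using bdd_meas_abs_int[OF assms] by (simp add: absolutely_integrable_on_def)

lemma trunc_small:
  fixes u :: "real \<Rightarrow> 'a::euclidean_space"
  assumes um: "u \<in> borel_measurable (lebesgue_on {0..T})" and ep: "0 < ep"
  shows "\<exists>R\<ge>0. (\<lambda>t. if R < norm (u t) then 1 else 0::real) integrable_on {0..T}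
      \<and> integral {0..T} (\<lambda>t. if R < norm (u t) then 1 else 0::real) < ep"
proof -
  define f where "f = (\<lambda>(n::nat) t. if real n < norm (u t) then 1 else 0::real)"
  have fm: "f n \<in> borel_measurable (lebesgue_on {0..T})" for n
  proof -
    have "(\<lambda>t. norm (u t)) \<in> borel_measurable (lebesgue_on {0..T})"
      by (rule measurable_compose[OF um borel_measurable_norm])
    then have "{t \<in> space (lebesgue_on {0..T}). real n < norm (u t)} \<in> sets (lebesgue_on {0..T})"
      by measurable
    then show ?thesis unfolding f_def
      by (intro measurable_If) auto
  qed
  have fi: "f n integrable_on {0..T}" for n
    by (rule int_of_bdd_meas[OF fm, where B=1]) (auto simp: f_def)
  have lim: "(\<lambda>n. integral {0..T} (f n)) \<longlonglongrightarrow> integral {0..T} (\<lambda>t. 0)"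
  proof (rule dominated_convergence(2)[where h="\<lambda>t. 1"])
    show "\<And>n. f n integrable_on {0..T}" by (rule fi)
    show "(\<lambda>t. 1::real) integrable_on {0..T}" by (rule integrable_const_ivl)
    show "\<And>n t. t \<in> {0..T} \<Longrightarrow> norm (f n t) \<le> 1" by (auto simp: f_def)
    fix t
    obtain N where N: "norm (u t) < real N" using reals_Archimedean2 by blast
    have "\<forall>\<^sub>F n in sequentially. f n t = 0"
      unfolding eventually_sequentially
      by (rule exI[of _ N]) (use N in \<open>auto simp: f_def\<close>)
    then show "(\<lambda>n. f n t) \<longlonglongrightarrow> 0" by (rule tendsto_eventually)
  qed
  then have "\<forall>\<^sub>F n in sequentially. integral {0..T} (f n) < ep"
    using ep by (intro order_tendstoD(2)) auto
  then obtain n where "integral {0..T} (f n) < ep" by (auto simp: eventually_sequentially)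
  then show ?thesis using fi[of n] unfolding f_def by (intro exI[of _ "real n"]) auto
qed

lemma cont_approx:
  fixes y :: "real \<Rightarrow> 'a::euclidean_space"
  assumes ym: "y \<in> borel_measurable (lebesgue_on {0..T})" and ep: "0 < ep"
  shows "\<exists>\<phi>. continuous_on UNIV \<phi> \<and> (\<lambda>t. min 1 (norm (\<phi> t - y t))) integrable_on {0..T}
     \<and> integral {0..T} (\<lambda>t. min 1 (norm (\<phi> t - y t))) < ep"
proof -
  have "y measurable_on {0..T}" using ym by (simp add: measurable_on_iff_borel_measurable)
  then obtain N g where N: "negligible N" and gc: "\<And>n. continuous_on UNIV (g n)"
    and gl: "\<And>x. x \<notin> N \<Longrightarrow> (\<lambda>n. g n x) \<longlonglongrightarrow> (if x \<in> {0..T} then y x else 0)"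
    unfolding measurable_on_def by blast
  define k where "k = (\<lambda>n t. min 1 (norm (g n t - y t)))"
  define f where "f = (\<lambda>n t. if t \<in> N then 0 else k n t)"
  have km: "k n \<in> borel_measurable (lebesgue_on {0..T})" for n
  proof -
    have "g n \<in> borel_measurable (lebesgue_on {0..T})"
      by (rule continuous_imp_measurable_on_sets_lebesgue) (auto intro: continuous_on_subset[OF gc])
    then have "(\<lambda>t. g n t - y t) \<in> borel_measurable (lebesgue_on {0..T})"
      using ym by (rule borel_measurable_diff)
    then have "(\<lambda>t. norm (g n t - y t)) \<in> borel_measurable (lebesgue_on {0..T})"
      by (rule measurable_compose[OF _ borel_measurable_norm])
    then show ?thesis unfolding k_def by (intro borel_measurable_min) auto
  qed
  have ki: "k n integrable_on {0..T}" for n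
    by (rule int_of_bdd_meas[OF km, where B=1]) (auto simp: k_def)
  have fi: "f n integrable_on {0..T}" for n
    by (rule integrable_spike[OF ki[of n] N]) (auto simp: f_def)
  have fk: "integral {0..T} (f n) = integral {0..T} (k n)" for n
    by (rule integral_spike[OF N]) (auto simp: f_def)
  have lim: "(\<lambda>n. integral {0..T} (f n)) \<longlonglongrightarrow> integral {0..T} (\<lambda>t. 0)"
  proof (rule dominated_convergence(2)[where h="\<lambda>t. 1"])
    show "\<And>n. f n integrable_on {0..T}" by (rule fi)
    show "(\<lambda>t. 1::real) integrable_on {0..T}" by (rule integrable_const_ivl)
    show "\<And>n t. t \<in> {0..T} \<Longrightarrow> norm (f n t) \<le> 1" by (auto simp: f_def k_def)
    fix t assume t: "t \<in> {0..T}"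
    show "(\<lambda>n. f n t) \<longlonglongrightarrow> 0"
    proof (cases "t \<in> N")
      case True then show ?thesis by (simp add: f_def)
    next
      case False
      then have "(\<lambda>n. g n t) \<longlonglongrightarrow> y t" using gl[of t] t by simp
      then have "(\<lambda>n. g n t - y t) \<longlonglongrightarrow> 0" by (rule LIM_zero)
      then have "(\<lambda>n. norm (g n t - y t)) \<longlonglongrightarrow> 0" by (rule tendsto_norm_zero)
      then have "(\<lambda>n. min 1 (norm (g n t - y t))) \<longlonglongrightarrow> min 1 0"
        by (intro tendsto_min tendsto_const)
      then show ?thesis using False by (simp add: f_def k_def)
    qed
  qed
  then have "\<forall>\<^sub>F n in sequentially. integral {0..T} (f n) < ep"
    using ep by (intro order_tendstoD(2)) auto
  then obtain n where "integral {0..T} (f n) < ep" by (auto simp: eventually_sequentially)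
  then show ?thesis using fk[of n] ki[of n] gc[of n] unfolding k_def by (intro exI[of _ "g n"]) auto
qed

lemma windows_measure:
  fixes h \<tau> :: real and N :: nat
  assumes h: "0 \<le> h" and tau: "0 \<le> \<tau>"
  defines "W \<equiv> (\<Union>j<N. {real j * h .. real j * h + \<tau>})"
  shows "indicat_real W integrable_on {0..T}" and "integral {0..T} (indicat_real W) \<le> real N * \<tau>"
proof -
  have cW: "compact W" unfolding W_def by (intro compact_UN) auto
  have cWT: "compact (W \<inter> {0..T})" by (intro compact_Int_closed cW) auto
  then have lWT: "W \<inter> {0..T} \<in> lmeasurable" by (rule lmeasurable_compact)
  then show "indicat_real W integrable_on {0..T}" by (simp add: integrable_on_indicator)
  have "integral {0..T} (indicat_real W) = measure lebesgue (W \<inter> {0..T})"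
    by (rule integral_indicator[OF lWT])
  also have "\<dots> \<le> measure lebesgue W"
    by (rule measure_mono_fmeasurable) (use lWT lmeasurable_compact[OF cW] in auto)
  also have "\<dots> \<le> (\<Sum>j<N. measure lebesgue {real j * h .. real j * h + \<tau>})"
    unfolding W_def by (rule measure_UNION_le) auto
  also have "\<dots> = real N * \<tau>" using tau by simp
  finally show "integral {0..T} (indicat_real W) \<le> real N * \<tau>" .
qed

lemma hold_index:
  fixes h \<tau> t :: real
  assumes h: "0 < h" and tau: "0 < \<tau>" "\<tau> < h" and NhT: "real N * h = T" and N: "0 < N"
    and t: "t \<in> {0..T}" and tW: "\<forall>j<N. t < real j * h \<or> real j * h + \<tau> < t"
  shows "\<exists>j<N. real j * h + \<tau> < t \<and> t \<le> real (Suc j) * h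
     \<and> (\<forall>\<sigma>\<in>{real j * h + \<tau> <..< real (Suc j) * h}. \<forall>i<N. \<sigma> < real i * h \<or> real i * h + \<tau> < \<sigma>)"
proof -
  have t0: "0 < t"
  proof -
    have "t < real 0 * h \<or> real 0 * h + \<tau> < t" using tW N by blast
    then show ?thesis using t tau by auto
  qed
  define j where "j = nat (ceiling (t / h)) - 1"
  have c1: "1 \<le> ceiling (t / h)" using t0 h by (simp add: le_ceiling_iff)
  have ij: "int j = ceiling (t / h) - 1"
  proof -
    define c where "c = ceiling (t / h)"
    have "1 \<le> c" using c1 by (simp add: c_def)
    then have "int (nat c - 1) = c - 1" by arith
    then show ?thesis by (simp add: j_def c_def)
  qed
  have jeq: "real j = real_of_int (ceiling (t / h)) - 1"
  proof -
    have "real j = real_of_int (int j)" by simp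
    also have "\<dots> = real_of_int (ceiling (t / h)) - 1" by (simp add: ij)
    finally show ?thesis .
  qed
  have "real j * h < t"
  proof -
    have "real_of_int (ceiling (t / h)) - 1 < t / h" by linarith
    then have "real j < t / h" using jeq by simp
    then have "real j * h < t / h * h" using h by (intro mult_strict_right_mono) auto
    then show ?thesis using h by simp
  qed
  moreover have tle: "t \<le> real (Suc j) * h"
  proof -
    have "t / h \<le> real_of_int (ceiling (t / h))" by (rule le_of_int_ceiling)
    then have "t / h \<le> real (Suc j)" using jeq by simp
    then have "t / h * h \<le> real (Suc j) * h" using h by (intro mult_right_mono) auto
    then show ?thesis using h by simp
  qed
  moreover have jN: "j < N"
  proof -
    have "ceiling (t / h) \<le> ceiling (real N)"
      using t h NhT by (intro ceiling_mono) (simp add: field_simps)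
    then have "ceiling (t / h) \<le> int N" by simp
    then have "int j < int N" using ij by simp
    then show ?thesis by simp
  qed
  ultimately have "real j * h + \<tau> < t" using tW by fastforce
  moreover have "\<forall>\<sigma>\<in>{real j * h + \<tau> <..< real (Suc j) * h}. \<forall>i<N. \<sigma> < real i * h \<or> real i * h + \<tau> < \<sigma>"
  proof (intro ballI allI impI)
    fix \<sigma> i assume s: "\<sigma> \<in> {real j * h + \<tau> <..< real (Suc j) * h}" and i: "i < N"
    show "\<sigma> < real i * h \<or> real i * h + \<tau> < \<sigma>"
    proof (cases "i \<le> j")
      case True
      then have "real i * h \<le> real j * h" using h by (intro mult_right_mono) auto
      then show ?thesis using s by auto
    next
      case False
      then have "real (Suc j) * h \<le> real i * h" using h by (intro mult_right_mono) auto
      then show ?thesis using s by auto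
    qed
  qed
  ultimately show ?thesis using tle jN by blast
qed



lemma approx_main:
  fixes A :: "real^'m^'m" and B :: "real^'k^'m"
    and g :: "real^'k \<Rightarrow> real^'m \<Rightarrow> real^'n \<Rightarrow> real^'n"
  assumes e: "0 < e" and rank: "kalman_rank A B = CARD('m)"
    and gm: "(\<lambda>(u, y, z). g u y z) \<in> borel_measurable borel"
    and gl: "\<And>u y z y' z'. norm (g u y z - g u y' z') \<le> L * norm ((y, z) - (y', z'))"
    and gb: "\<And>u y z. norm (g u y z) \<le> Mg"
    and T: "0 < T"
    and usm: "meas_on T us" and ysm: "meas_on T ys"
    and zss: "cara_solution (\<lambda>t z. g (us t) (ys t) z) z0 T zs"
    and eta: "0 < eta"
  shows "\<exists>u y z. meas_on T u \<and> cara_solution (\<lambda>t y. (1 / e) *\<^sub>R (A *v y + B *v u t)) y0 T y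
     \<and> cara_solution (\<lambda>t z. g (u t) (y t) z) z0 T z \<and> norm (z T - zs T) < eta"
proof -
  define Lp where "Lp = \<bar>L\<bar> + 1"
  have Lp: "0 < Lp" by (simp add: Lp_def)
  have Mg: "0 \<le> Mg" using gb[of undefined undefined undefined] by (rule order_trans[OF norm_ge_zero])
  define Kc where "Kc = 2 * Mg + Lp"
  have Kc: "0 < Kc" using Mg Lp by (simp add: Kc_def)
  define E where "E = exp (Lp * T)"
  have E: "0 < E" by (simp add: E_def)
  define ep where "ep = eta / (E * (4 * Mg + 2 * Kc * T + Kc + 1))"
  have "0 \<le> 2 * Kc * T" using Kc T by simp
  then have den1: "0 < 4 * Mg + 2 * Kc * T + Kc + 1" using Mg Kc by linarith
  have den: "0 < E * (4 * Mg + 2 * Kc * T + Kc + 1)" by (rule mult_pos_pos[OF E den1])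
  have ep: "0 < ep" using eta den by (simp add: ep_def)
  define \<kappa> where "\<kappa> = min ep (1/2)"
  have kap: "0 < \<kappa>" "\<kappa> \<le> ep" "\<kappa> \<le> 1/2" using ep by (auto simp: \<kappa>_def)
  have usb: "us \<in> borel_measurable (lebesgue_on {0..T})" using usm by (simp add: meas_on_def)
  have ysb: "ys \<in> borel_measurable (lebesgue_on {0..T})" using ysm by (simp add: meas_on_def)
  obtain R where R: "0 \<le> R" and chiRi: "(\<lambda>t. if R < norm (us t) then 1 else 0::real) integrable_on {0..T}"
    and chiR: "integral {0..T} (\<lambda>t. if R < norm (us t) then 1 else 0::real) < ep"
    using trunc_small[OF usb ep] by blast
  obtain \<phi> where \<phi>c: "continuous_on UNIV \<phi>"
    and Ji: "(\<lambda>t. min 1 (norm (\<phi> t - ys t))) integrable_on {0..T}"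
    and J: "integral {0..T} (\<lambda>t. min 1 (norm (\<phi> t - ys t))) < ep"
    using cont_approx[OF ysb ep] by blast
  have \<phi>cT: "continuous_on {0..T} \<phi>" using continuous_on_subset[OF \<phi>c] by auto
  have "uniformly_continuous_on {0..T} \<phi>" by (rule compact_uniformly_continuous[OF \<phi>cT]) auto
  then obtain \<delta> where \<delta>: "0 < \<delta>" and \<delta>u: "\<And>x x'. x \<in> {0..T} \<Longrightarrow> x' \<in> {0..T} \<Longrightarrow> dist x' x < \<delta> \<Longrightarrow> dist (\<phi> x') (\<phi> x) < \<kappa>"
    unfolding uniformly_continuous_on_def using kap(1) by metis
  obtain P where P: "\<And>t. t \<in> {0..T} \<Longrightarrow> norm (\<phi> t) \<le> P"
  proof -
    have "compact (\<phi> ` {0..T})" by (rule compact_continuous_image[OF \<phi>cT]) auto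
    then show ?thesis using that by (meson compact_imp_bounded bounded_iff imageI)
  qed
  have P0: "0 \<le> P" using P[of 0] T by (auto intro: order_trans[OF norm_ge_zero])
  obtain KA where KA: "0 < KA" "\<And>x. norm (A *v x) \<le> KA * norm x" by (rule matvec_bound[of A]) blast
  obtain KB where KB: "0 < KB" "\<And>x. norm (B *v x) \<le> KB * norm x" by (rule matvec_bound[of B]) blast
  define K1 where "K1 = (KA * P + KB * R) / e"
  define K2 where "K2 = KA / e"
  have K1: "0 \<le> K1" using KA KB P0 R e by (simp add: K1_def)
  have K2: "0 < K2" using KA e by (simp add: K2_def)
  define E2 where "E2 = exp (K2 * T)"
  have E2: "0 < E2" by (simp add: E2_def)
  define hmax where "hmax = min (\<delta> / 2) (\<kappa> / (K1 * E2 + 1))"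
  have hmax: "0 < hmax" using \<delta> kap K1 E2 by (simp add: hmax_def add_nonneg_pos)
  obtain N :: nat where N: "T / hmax < real N" using reals_Archimedean2 by blast
  have "0 < T / hmax" using T hmax by simp
  then have "0 < real N" using N by linarith
  then have Npos: "0 < N" by simp
  define h where "h = T / real N"
  have h: "0 < h" using T Npos by (simp add: h_def)
  have hlt: "h < hmax" using N hmax Npos unfolding h_def by (simp add: field_simps)
  have hT: "h \<le> T" using Npos T unfolding h_def by (simp add: field_simps)
  have NhT: "real N * h = T" using Npos by (simp add: h_def)
  define \<tau> where "\<tau> = min (h / 2) (ep / real N)"
  have tau: "0 < \<tau>" "\<tau> < h" using h ep Npos by (auto simp: \<tau>_def)
  have Ntau: "real N * \<tau> \<le> ep"
  proof -
    have "real N * \<tau> \<le> real N * (ep / real N)" by (intro mult_left_mono) (auto simp: \<tau>_def)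
    then show ?thesis using Npos by simp
  qed
  define uh where "uh = (\<lambda>t. if norm (us t) \<le> R then us t else 0)"
  have uhm: "meas_on T uh"
  proof -
    have "(\<lambda>t. norm (us t)) \<in> borel_measurable (lebesgue_on {0..T})"
      by (rule measurable_compose[OF usb borel_measurable_norm])
    then have "{t \<in> space (lebesgue_on {0..T}). norm (us t) \<le> R} \<in> sets (lebesgue_on {0..T})"
      by measurable
    then show ?thesis unfolding meas_on_def uh_def
      by (intro measurable_If usb) auto
  qed
  have uhR: "\<And>t. norm (uh t) \<le> R" using R by (simp add: uh_def)
  define c where "c = (\<lambda>j::nat. \<phi> (real j * h + \<tau>))"
  obtain u y where um: "meas_on T u" and uR': "\<exists>R'. \<forall>t. norm (u t) \<le> R'"
    and uuh: "\<forall>t. (\<forall>j<N. t < real j * h \<or> real j * h + \<tau> < t) \<longrightarrow> u t = uh t"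
    and ysol: "cara_solution (lf A B e u) y0 T y" and yc: "\<forall>j<N. y (real j * h + \<tau>) = c j"
    using lin_windows[OF e rank h tau NhT uhm uhR, of y0 c] by blast
  have ycont: "continuous_on {0..T} y" by (rule cara_cont[OF ysol])
  have yb: "y \<in> borel_measurable (lebesgue_on {0..T})"
    by (rule continuous_imp_measurable_on_sets_lebesgue[OF ycont]) auto
  have ub: "u \<in> borel_measurable (lebesgue_on {0..T})" using um by (simp add: meas_on_def)
  obtain z where zsol: "cara_solution (\<lambda>t z. g (u t) (y t) z) z0 T z"
    using z_exists[OF gm gl gb _ ub yb, of z0] T by auto
  have stab: "norm (z T - zs T) \<le> integral {0..T} (\<lambda>s. norm (g (u s) (y s) (zs s) - g (us s) (ys s) (zs s))) * exp ((\<bar>L\<bar> + 1) * T)"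
    by (rule z_stab[OF gm gl gb _ ub yb usb ysb zsol zss]) (use T in auto)
  define D where "D = (\<lambda>s. norm (g (u s) (y s) (zs s) - g (us s) (ys s) (zs s)))"
  define W where "W = (\<Union>j<N. {real j * h .. real j * h + \<tau>})"
  define chR where "chR = (\<lambda>t. if R < norm (us t) then 1 else 0::real)"
  define m where "m = (\<lambda>t. min 1 (norm (\<phi> t - ys t)))"
  have zsc: "continuous_on {0..T} zs" by (rule cara_cont[OF zss])
  have zsb: "zs \<in> borel_measurable (lebesgue_on {0..T})"
    by (rule continuous_imp_measurable_on_sets_lebesgue[OF zsc]) auto
  have Dm: "D \<in> borel_measurable (lebesgue_on {0..T})"
  proof -
    have "(\<lambda>s. g (u s) (y s) (zs s)) \<in> borel_measurable (lebesgue_on {0..T})"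
      by (rule g_comp_meas[OF gm ub yb zsb])
    moreover have "(\<lambda>s. g (us s) (ys s) (zs s)) \<in> borel_measurable (lebesgue_on {0..T})"
      by (rule g_comp_meas[OF gm usb ysb zsb])
    ultimately show ?thesis unfolding D_def
      by (intro measurable_compose[OF _ borel_measurable_norm] borel_measurable_diff)
  qed
  have D2: "D s \<le> 2 * Mg" for s
  proof -
    have "D s \<le> norm (g (u s) (y s) (zs s)) + norm (g (us s) (ys s) (zs s))"
      unfolding D_def by (rule norm_triangle_ineq4)
    also have "\<dots> \<le> Mg + Mg" using gb by (intro add_mono)
    finally show ?thesis by simp
  qed
  have Di: "D integrable_on {0..T}"
    by (rule int_of_bdd_meas[OF Dm, where B="2 * Mg"]) (use D2 in \<open>auto simp: D_def\<close>)
  have Wi: "indicat_real W integrable_on {0..T}" and Wint: "integral {0..T} (indicat_real W) \<le> real N * \<tau>"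
    unfolding W_def using windows_measure[where h=h and \<tau>=\<tau> and T=T and N=N] h tau by auto
  have pw: "D s \<le> 2 * Mg * indicat_real W s + 2 * Mg * chR s + Kc * (2 * \<kappa>) + Kc * m s" if s: "s \<in> {0..T}" for s
  proof -
    have m0: "0 \<le> m s" by (simp add: m_def)
    have ch0: "0 \<le> chR s" by (simp add: chR_def)
    have i0: "0 \<le> indicat_real W s" by simp
    have nn1: "0 \<le> 2 * Mg * indicat_real W s" using Mg i0 by simp
    have nn2: "0 \<le> 2 * Mg * chR s" using Mg ch0 by simp
    have nn3: "0 \<le> Kc * (2 * \<kappa>)" using Kc kap by simp
    have nn4: "0 \<le> Kc * m s" using Kc m0 by simp
    show ?thesis
    proof (cases "s \<in> W")
      case True
      have "D s \<le> 2 * Mg * indicat_real W s" using True D2 by simp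
      then show ?thesis using nn2 nn3 nn4 by linarith
    next
      case notW: False
      have sW: "\<forall>j<N. s < real j * h \<or> real j * h + \<tau> < s"
      proof (intro allI impI)
        fix j assume "j < N"
        then have "s \<notin> {real j * h .. real j * h + \<tau>}" using notW by (auto simp: W_def)
        then show "s < real j * h \<or> real j * h + \<tau> < s" by auto
      qed
      show ?thesis
      proof (cases "R < norm (us s)")
        case True
        then have "D s \<le> 2 * Mg * chR s" using D2 by (simp add: chR_def)
        then show ?thesis using nn1 nn3 nn4 by linarith
      next
        case False
        then have uus: "u s = us s" using uuh sW by (simp add: uh_def)
        have DL: "D s \<le> Lp * norm (y s - ys s)"
        proof -
          have "D s \<le> L * norm ((y s, zs s) - (ys s, zs s))" unfolding D_def uus by (rule gl)
          also have "\<dots> = L * norm (y s - ys s)" by (simp add: norm_Pair)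
          also have "\<dots> \<le> Lp * norm (y s - ys s)" unfolding Lp_def by (intro mult_right_mono) auto
          finally show ?thesis .
        qed
        have Dmin: "D s \<le> Kc * min 1 (norm (y s - ys s))"
        proof (cases "norm (y s - ys s) \<le> 1")
          case True
          have "Lp * norm (y s - ys s) \<le> Kc * norm (y s - ys s)"
            using Mg by (intro mult_right_mono) (auto simp: Kc_def)
          then show ?thesis using DL True by simp
        next
          case False
          have "2 * Mg \<le> Kc" using Lp by (simp add: Kc_def)
          then show ?thesis using D2[of s] False by simp
        qed
              obtain j where j: "j < N" "real j * h + \<tau> < s" "s \<le> real (Suc j) * h"
          and free: "\<forall>\<sigma>\<in>{real j * h + \<tau> <..< real (Suc j) * h}. \<forall>i<N. \<sigma> < real i * h \<or> real i * h + \<tau> < \<sigma>"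
          using hold_index[OF h tau NhT Npos s sW] by blast
        define a where "a = real j * h + \<tau>"
        define b where "b = real (Suc j) * h"
        have bT: "b \<le> T"
        proof -
          have "real (Suc j) * h \<le> real N * h" using j(1) h by (intro mult_right_mono) auto
          then show ?thesis using NhT by (simp add: b_def)
        qed
        have a0: "0 \<le> a" using h tau by (simp add: a_def)
        have ab: "a \<le> b" using j(2,3) by (simp add: a_def b_def)
        have ba: "b - a \<le> h" using tau by (simp add: a_def b_def algebra_simps)
        have ubnd: "norm (u \<sigma>) \<le> R" if "\<sigma> \<in> {a<..<b}" for \<sigma>
        proof -
          have "u \<sigma> = uh \<sigma>" using uuh free that by (simp add: a_def b_def)
          then show ?thesis using uhR by simp
        qed
        have ya: "y a = \<phi> a" using yc j(1) by (simp add: a_def c_def)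
        have aT: "a \<in> {0..T}" using a0 ab bT by auto
        have hold: "norm (y s - y a) \<le> (b - a) * ((KA * norm (y a) + KB * R) / e) * exp ((KA / e) * (b - a))"
          by (rule lin_hold[OF e ysol a0 ab bT ubnd KA(1) KA(2) _ KB(2) _ R]) (use KB j a_def b_def in auto)
        also have "\<dots> \<le> h * K1 * E2"
        proof (intro mult_mono)
          show "b - a \<le> h" by (rule ba)
          show "(KA * norm (y a) + KB * R) / e \<le> K1"
            unfolding K1_def using KA P[OF aT] ya e KB
            by (intro divide_right_mono add_mono mult_left_mono) auto
          show "exp (KA / e * (b - a)) \<le> E2"
          proof -
            have "KA / e * (b - a) \<le> KA / e * T" using ba hT K2 by (intro mult_left_mono) (auto simp: K2_def)
            then show ?thesis unfolding E2_def K2_def by simp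
          qed
        qed (use h K1 ab KA KB R e in \<open>auto intro!: mult_nonneg_nonneg divide_nonneg_pos add_nonneg_nonneg\<close>)
        also have "\<dots> \<le> \<kappa>"
        proof -
          have "h * K1 * E2 \<le> hmax * (K1 * E2)" using hlt K1 E2 h by (simp add: mult.assoc mult_right_mono)
          also have "\<dots> \<le> (\<kappa> / (K1 * E2 + 1)) * (K1 * E2)"
            using K1 E2 by (intro mult_right_mono) (auto simp: hmax_def)
          also have "\<dots> \<le> \<kappa>"
          proof -
            have q: "0 \<le> K1 * E2" using K1 E2 by simp
            then have "K1 * E2 / (K1 * E2 + 1) \<le> 1" by (simp add: divide_le_eq_1)
            then have "\<kappa> * (K1 * E2 / (K1 * E2 + 1)) \<le> \<kappa> * 1" using kap by (intro mult_left_mono) auto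
            then show ?thesis by (simp add: field_simps)
          qed
          finally show ?thesis .
        qed
        finally have h1: "norm (y s - y a) \<le> \<kappa>" .
        have h2: "norm (\<phi> a - \<phi> s) \<le> \<kappa>"
        proof -
          have "dist a s < \<delta>"
          proof -
            have "dist a s \<le> h" using j(2,3) ba by (simp add: dist_real_def a_def b_def)
            then show ?thesis using hlt \<delta> by (simp add: hmax_def)
          qed
          then show ?thesis using \<delta>u[OF s aT] by (simp add: dist_norm less_imp_le)
        qed
        have "norm (y s - \<phi> s) \<le> 2 * \<kappa>"
        proof -
          have "norm (y s - \<phi> s) \<le> norm (y s - y a) + norm (\<phi> a - \<phi> s)"
            using norm_triangle_ineq[of "y s - y a" "\<phi> a - \<phi> s"] ya by simp
          then show ?thesis using h1 h2 by simp
        qed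
        have "min 1 (norm (y s - ys s)) \<le> 2 * \<kappa> + m s"
        proof -
          have "norm (y s - ys s) \<le> norm (y s - \<phi> s) + norm (\<phi> s - ys s)"
            using norm_triangle_ineq[of "y s - \<phi> s" "\<phi> s - ys s"] by simp
          then show ?thesis using \<open>norm (y s - \<phi> s) \<le> 2 * \<kappa>\<close> kap unfolding m_def by linarith
        qed
        then have "D s \<le> Kc * (2 * \<kappa>) + Kc * m s"
          using Dmin Kc by (simp add: distrib_left[symmetric] mult_left_mono order_trans)
        then show ?thesis using nn1 nn2 by linarith
      qed
    qed
  qed
  have chRi: "chR integrable_on {0..T}" using chiRi by (simp add: chR_def)
  have mi: "m integrable_on {0..T}" using Ji by (simp add: m_def)
  have i1: "(\<lambda>s. 2 * Mg * indicat_real W s) integrable_on {0..T}"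
    using integrable_on_cmult_left[OF Wi, of "2 * Mg"] by simp
  have i2: "(\<lambda>s. 2 * Mg * chR s) integrable_on {0..T}"
    using integrable_on_cmult_left[OF chRi, of "2 * Mg"] by simp
  have i3: "(\<lambda>s. Kc * m s) integrable_on {0..T}"
    using integrable_on_cmult_left[OF mi, of "Kc"] by simp
  have "integral {0..T} D \<le> integral {0..T} (\<lambda>s. 2 * Mg * indicat_real W s + 2 * Mg * chR s + Kc * (2 * \<kappa>) + Kc * m s)"
    by (rule integral_le[OF Di _ pw]) (intro integrable_add i1 i2 i3 integrable_const_ivl)
  also have "\<dots> = 2 * Mg * integral {0..T} (indicat_real W) + 2 * Mg * integral {0..T} chR + Kc * (2 * \<kappa>) * T + Kc * integral {0..T} m"
  proof -
    have "integral {0..T} (\<lambda>s. 2 * Mg * indicat_real W s + 2 * Mg * chR s + Kc * (2 * \<kappa>) + Kc * m s)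
        = integral {0..T} (\<lambda>s. 2 * Mg * indicat_real W s + 2 * Mg * chR s + Kc * (2 * \<kappa>)) + integral {0..T} (\<lambda>s. Kc * m s)"
      by (rule integral_add[OF integrable_add[OF integrable_add[OF i1 i2] integrable_const_ivl] i3])
    also have "integral {0..T} (\<lambda>s. 2 * Mg * indicat_real W s + 2 * Mg * chR s + Kc * (2 * \<kappa>))
        = integral {0..T} (\<lambda>s. 2 * Mg * indicat_real W s + 2 * Mg * chR s) + integral {0..T} (\<lambda>s. Kc * (2 * \<kappa>))"
      by (rule integral_add[OF integrable_add[OF i1 i2] integrable_const_ivl])
    also have "integral {0..T} (\<lambda>s. 2 * Mg * indicat_real W s + 2 * Mg * chR s)
        = integral {0..T} (\<lambda>s. 2 * Mg * indicat_real W s) + integral {0..T} (\<lambda>s. 2 * Mg * chR s)"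
      by (rule integral_add[OF i1 i2])
    finally show ?thesis using T by simp
  qed
  also have "\<dots> \<le> 2 * Mg * ep + 2 * Mg * ep + Kc * (2 * ep) * T + Kc * ep"
  proof -
    have "2 * Mg * integral {0..T} (indicat_real W) \<le> 2 * Mg * ep"
      using Wint Ntau Mg by (intro mult_left_mono) auto
    moreover have "2 * Mg * integral {0..T} chR \<le> 2 * Mg * ep"
      using chiR Mg unfolding chR_def by (intro mult_left_mono) auto
    moreover have "Kc * (2 * \<kappa>) * T \<le> Kc * (2 * ep) * T"
      using kap Kc T by (intro mult_right_mono mult_left_mono) auto
    moreover have "Kc * integral {0..T} m \<le> Kc * ep"
      using J Kc unfolding m_def by (intro mult_left_mono) auto
    ultimately show ?thesis by linarith
  qed
  also have "\<dots> = (4 * Mg + 2 * Kc * T + Kc) * ep" by (simp add: algebra_simps)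
  also have "\<dots> < (4 * Mg + 2 * Kc * T + Kc + 1) * ep" using ep by simp
  also have "\<dots> = eta / E" using den E by (simp add: ep_def field_simps)
  finally have Dlt: "integral {0..T} D < eta / E" .
  have "norm (z T - zs T) \<le> integral {0..T} D * E" using stab by (simp add: D_def E_def Lp_def)
  also have "\<dots> < eta / E * E" using Dlt E by (intro mult_strict_right_mono) auto
  also have "\<dots> = eta" using E by simp
  finally have "norm (z T - zs T) < eta" .
  moreover have "cara_solution (\<lambda>t y. (1 / e) *\<^sub>R (A *v y + B *v u t)) y0 T y"
    using ysol by (simp add: lf_def)
  ultimately show ?thesis using um zsol by blast
qed



theorem corollary1:
  fixes A :: "real^'m^'m" and B :: "real^'k^'m"
    and g :: "real^'k \<Rightarrow> real^'m \<Rightarrow> real^'n \<Rightarrow> real^'n"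
    and y0 :: "real^'m" and z0 :: "real^'n" and T :: real
    and G :: "real^'n \<Rightarrow> real" and \<epsilon> :: real
  assumes rank: "kalman_rank A B = CARD('m)"
    and g_meas: "(\<lambda>(u, y, z). g u y z) \<in> borel_measurable borel"
    and g_bdd: "bounded (range (\<lambda>(u, y, z). g u y z))"
    and g_lip: "\<exists>L. \<forall>u y z y' z'. norm (g u y z - g u y' z') \<le> L * norm ((y, z) - (y', z'))"
    and T_pos: "T > 0"
    and G_cont: "continuous_on UNIV G"
    and eps_pos: "\<epsilon> > 0"
  shows "G_eps A B g y0 z0 T G \<epsilon> = G_relaxed g z0 T G"
proof -
  obtain L where gl: "\<And>u y z y' z'. norm (g u y z - g u y' z') \<le> L * norm ((y, z) - (y', z'))"
    using g_lip by blast
  obtain Mg where Mg: "\<And>x. x \<in> range (\<lambda>(u, y, z). g u y z) \<Longrightarrow> norm x \<le> Mg"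
    using g_bdd unfolding bounded_iff by blast
  have gb: "\<And>u y z. norm (g u y z) \<le> Mg"
  proof -
    fix u y z
    have "g u y z \<in> range (\<lambda>(u, y, z). g u y z)" by (rule range_eqI[of _ _ "(u, y, z)"]) simp
    then show "norm (g u y z) \<le> Mg" by (rule Mg)
  qed
  define Se where "Se = {G (z T) | u y z. meas_on T u \<and>
      cara_solution (\<lambda>t y. (1 / \<epsilon>) *\<^sub>R (A *v y + B *v u t)) y0 T y \<and>
      cara_solution (\<lambda>t z. g (u t) (y t) z) z0 T z}"
  define Sr where "Sr = {G (z T) | u (y :: real \<Rightarrow> real^'m) z.
      meas_on T u \<and> meas_on T y \<and>
      cara_solution (\<lambda>t z. g (u t) (y t) z) z0 T z}"
  have eqe: "G_eps A B g y0 z0 T G \<epsilon> = Inf Se" by (simp add: G_eps_def Se_def)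
  have eqr: "G_relaxed g z0 T G = Inf Sr" by (simp add: G_relaxed_def Sr_def)
  have T0: "0 \<le> T" using T_pos by simp
  have zb: "z T \<in> cball z0 (Mg * T)" if zs: "cara_solution (\<lambda>t z. g (u t) (y t) z) z0 T z" for u y z
  proof -
    have "z T = z0 + integral {0..T} (\<lambda>s. g (u s) (y s) (z s))"
      using zs T0 unfolding cara_solution_def by auto
    moreover have "norm (integral {0..T} (\<lambda>s. g (u s) (y s) (z s))) \<le> integral {0..T} (\<lambda>s. Mg)"
      using cara_int[OF zs, of T] T0 gb by (intro integral_norm_bound_integral) auto
    ultimately show ?thesis using T0 by (simp add: dist_norm mult.commute)
  qed
  have "compact (G ` cball z0 (Mg * T))"
    by (rule compact_continuous_image[OF continuous_on_subset[OF G_cont]]) auto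
  then obtain Gm where Gm: "\<And>x. x \<in> cball z0 (Mg * T) \<Longrightarrow> norm (G x) \<le> Gm"
    by (meson compact_imp_bounded bounded_iff imageI)
  have bSr: "bdd_below Sr"
    unfolding bdd_below_def Sr_def
    by (rule exI[of _ "- Gm"]) (use Gm zb in \<open>force simp: abs_le_iff\<close>)
  have bSe: "bdd_below Se"
    unfolding bdd_below_def Se_def
    by (rule exI[of _ "- Gm"]) (use Gm zb in \<open>force simp: abs_le_iff\<close>)
  have sub: "Se \<subseteq> Sr"
  proof
    fix v assume "v \<in> Se"
    then obtain u y z where h: "v = G (z T)" "meas_on T u"
      "cara_solution (\<lambda>t y. (1 / \<epsilon>) *\<^sub>R (A *v y + B *v u t)) y0 T y"
      "cara_solution (\<lambda>t z. g (u t) (y t) z) z0 T z"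
      unfolding Se_def by blast
    have "cara_solution (lf A B \<epsilon> u) y0 T y" using h(3) by (simp add: lf_def)
    then have "continuous_on {0..T} y" by (rule cara_cont)
    then have "meas_on T y" unfolding meas_on_def
      by (rule continuous_imp_measurable_on_sets_lebesgue) auto
    then show "v \<in> Sr" unfolding Sr_def using h by blast
  qed
  have ne: "Se \<noteq> {}"
  proof -
    obtain y where ys: "cara_solution (lf A B \<epsilon> (\<lambda>t. 0)) y0 T y"
      using lin_exists[OF eps_pos T0, of "\<lambda>t. 0" 0 A B y0] by (auto simp: meas_on_def)
    have yc: "continuous_on {0..T} y" by (rule cara_cont[OF ys])
    have yb: "y \<in> borel_measurable (lebesgue_on {0..T})"
      by (rule continuous_imp_measurable_on_sets_lebesgue[OF yc]) auto
    obtain z where "cara_solution (\<lambda>t z. g ((\<lambda>t. 0) t) (y t) z) z0 T z"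
      using z_exists[OF g_meas gl gb T0 _ yb, of "\<lambda>t. 0" z0] by auto
    then have "G (z T) \<in> Se" unfolding Se_def using ys
      by (intro CollectI exI[of _ "\<lambda>t. 0"] exI[of _ y] exI[of _ z]) (auto simp: lf_def meas_on_def)
    then show ?thesis by blast
  qed
  have le1: "Inf Sr \<le> Inf Se" by (rule cInf_superset_mono[OF ne bSr sub])
  have le2: "Inf Se \<le> Inf Sr"
  proof (rule cInf_greatest)
    show "Sr \<noteq> {}" using ne sub by blast
    fix v assume "v \<in> Sr"
    then obtain us ys zs where h: "v = G (zs T)" "meas_on T us" "meas_on T ys"
      "cara_solution (\<lambda>t z. g (us t) (ys t) z) z0 T zs"
      unfolding Sr_def by blast
    show "Inf Se \<le> v"
    proof (rule field_le_epsilon)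
      fix d :: real assume d: "0 < d"
      from G_cont have "\<exists>\<eta>>0. \<forall>x'\<in>UNIV. dist x' (zs T) < \<eta> \<longrightarrow> dist (G x') (G (zs T)) < d"
        unfolding continuous_on_iff using d by blast
      then obtain \<eta> where \<eta>: "0 < \<eta>" and G\<eta>: "\<And>x'. dist x' (zs T) < \<eta> \<Longrightarrow> dist (G x') (G (zs T)) < d"
        by blast
      obtain u y z where a: "meas_on T u" "cara_solution (\<lambda>t y. (1 / \<epsilon>) *\<^sub>R (A *v y + B *v u t)) y0 T y"
        "cara_solution (\<lambda>t z. g (u t) (y t) z) z0 T z" "norm (z T - zs T) < \<eta>"
        using approx_main[OF eps_pos rank g_meas gl gb T_pos h(2) h(3) h(4) \<eta>, of y0] by blast
      have inSe: "G (z T) \<in> Se" unfolding Se_def using a by blast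
      have "Inf Se \<le> G (z T)" by (rule cInf_lower[OF inSe bSe])
      also have "\<dots> \<le> v + d" using G\<eta>[of "z T"] a(4) h(1) by (simp add: dist_norm abs_less_iff)
      finally show "Inf Se \<le> v + d" .
    qed
  qed
  show ?thesis using le1 le2 eqe eqr by simp
qed


end
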